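(* Let $\vec p,\vec s$ be $n$-tuples with entries in $[1,\infty]$ and $\alpha$ be such that $\frac1n\sum_{i=1}^n\frac1{s_i}\le\frac1\alpha\le\frac1n\sum_{i=1}^n\frac1{p_i}$. Then $(L^{\vec p\,'},\ell^{\vec s\,'})(\mathbb R^n)$ is a dense subspace of $\mathcal H(\vec p\,',\vec s\,',\alpha')$.
   Context: For $\vec p=(p_1,\dots,p_n)$ with $1\le p_i\le\infty$, $\|f\|_{L^{\vec p}}=\Big(\int_{\mathbb R}\cdots\Big(\int_{\mathbb R}|f(x)|^{p_1}\,dx_1\Big)^{p_2/p_1}\cdots dx_n\Big)^{1/p_n}$ (usual modification when some $p_i=\infty$); primes denote conjugate exponents componentwise ($1/p_i+1/p_i'=1$, $1/\alpha+1/\alpha'=1$). For $k\in\mathbb Z^n$, $Q_{1,k}=k+[0,1)^n$; for a sequence $\{a_k\}_{k\in\mathbb Z^n}$, $\|\{a_k\}\|_{\ell^{\vec s}}=\Big(\sum_{k_n}\cdots\Big(\sum_{k_1}|a_k|^{s_1}\Big)^{s_2/s_1}\cdots\Big)^{1/s_n}$. $(L^{\vec p\,'},\ell^{\vec s\,'})(\mathbb R^n)$ is the set of $f\in L^1_{loc}$ with $\|f\|_{\vec p\,',\vec s\,'}:=\big\|\{\|f\chi_{Q_{1,k}}\|_{L^{\vec p\,'}}\}_k\big\|_{\ell^{\vec s\,'}}<\infty$. For $r>0$ the dilation $St^{(\alpha')}_r$ is $St^{(\alpha')}_r f(x)=r^{-n/\alpha'}f(x/r)$. The space $\mathcal H(\vec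 p\,',\vec s\,',\alpha')$ is the set of $f\in L^1_{loc}(\mathbb R^n)$ for which there is a sequence $\{(c_j,r_j,f_j)\}_{j\ge1}\subset\mathbb C\times(0,\infty)\times(L^{\vec p\,'},\ell^{\vec s\,'})(\mathbb R^n)$ (a block decomposition of $f$) with $f=\sum_{j\ge1}c_jSt^{(\alpha')}_{r_j}(f_j)$ in $L^1_{loc}(\mathbb R^n)$, $\|f_j\|_{\vec p\,',\vec s\,'}\le1$ for all $j$, and $\sum_j|c_j|<\infty$; its norm is $\|f\|_{\mathcal H(\vec p\,',\vec s\,',\alpha')}=\inf\sum_{j\ge1}|c_j|$, the infimum over all block decompositions of $f$. *)

theory Defs
  imports "HOL-Analysis.Analysis" "HOL-Probability.Essential_Supremum"
begin

definition conj_exp :: "ennreal \<Rightarrow> ennreal" where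
  "conj_exp p = inverse (1 - inverse p)"   (* 1/p + 1/p' = 1; conj 1 = \<infinity>, conj \<infinity> = 1 *)

definition epowr :: "ennreal \<Rightarrow> real \<Rightarrow> ennreal" where
  "epowr x a = (if x = \<infinity> then \<infinity> else ennreal (enn2real x powr a))"

definition lp_norm :: "'a measure \<Rightarrow> ennreal \<Rightarrow> ('a \<Rightarrow> ennreal) \<Rightarrow> ennreal" where
  "lp_norm M p g =
     (if p = \<infinity> then esssup M g
      else epowr (\<integral>\<^sup>+ x. epowr (g x) (enn2real p) \<partial>M) (1 / enn2real p))"

section \<open>Iterated (mixed) norms; coordinate 0 is the innermost one (x_1 in the paper)\<close>

text \<open>Points of the n-dimensional space are functions nat => 'a that are undefined
  outside {..<n} (the convention of PiM / PiE).\<close>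

primrec mixed_aux ::
  "'a measure \<Rightarrow> (nat \<Rightarrow> ennreal) \<Rightarrow> nat \<Rightarrow> ((nat \<Rightarrow> 'a) \<Rightarrow> ennreal) \<Rightarrow> (nat \<Rightarrow> 'a) \<Rightarrow> ennreal" where
  "mixed_aux M p 0 g = g"
| "mixed_aux M p (Suc k) g = (\<lambda>x. lp_norm M (p k) (\<lambda>t. mixed_aux M p k g (x(k := t))))"

definition mixed_norm ::
  "'a measure \<Rightarrow> (nat \<Rightarrow> ennreal) \<Rightarrow> nat \<Rightarrow> ((nat \<Rightarrow> 'a) \<Rightarrow> ennreal) \<Rightarrow> ennreal" where
  "mixed_norm M p n g = mixed_aux M p n g (\<lambda>_. undefined)"

abbreviation Rn :: "nat \<Rightarrow> (nat \<Rightarrow> real) measure" where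
  "Rn n \<equiv> PiM {..<n} (\<lambda>_. lborel)"

definition Lmixed_norm :: "nat \<Rightarrow> (nat \<Rightarrow> ennreal) \<Rightarrow> ((nat \<Rightarrow> real) \<Rightarrow> complex) \<Rightarrow> ennreal" where
  "Lmixed_norm n p f = mixed_norm lborel p n (\<lambda>x. ennreal (cmod (f x)))"

definition cube :: "nat \<Rightarrow> (nat \<Rightarrow> int) \<Rightarrow> (nat \<Rightarrow> real) set" where
  "cube n k = {x \<in> space (Rn n). \<forall>i<n. real_of_int (k i) \<le> x i \<and> x i < real_of_int (k i) + 1}"

definition amalgam_norm ::
  "nat \<Rightarrow> (nat \<Rightarrow> ennreal) \<Rightarrow> (nat \<Rightarrow> ennreal) \<Rightarrow> ((nat \<Rightarrow> real) \<Rightarrow> complex) \<Rightarrow> ennreal" where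
  "amalgam_norm n p s f =
     mixed_norm (count_space UNIV) s n
       (\<lambda>k. Lmixed_norm n p (\<lambda>x. indicator (cube n k) x * f x))"

definition box_R :: "nat \<Rightarrow> real \<Rightarrow> (nat \<Rightarrow> real) set" where
  "box_R n R = {x \<in> space (Rn n). \<forall>i<n. \<bar>x i\<bar> \<le> R}"

definition loc_int :: "nat \<Rightarrow> ((nat \<Rightarrow> real) \<Rightarrow> complex) \<Rightarrow> bool" where
  "loc_int n f \<longleftrightarrow> (\<forall>R. set_integrable (Rn n) (box_R n R) f)"

definition amalgam :: "nat \<Rightarrow> (nat \<Rightarrow> ennreal) \<Rightarrow> (nat \<Rightarrow> ennreal) \<Rightarrow> ((nat \<Rightarrow> real) \<Rightarrow> complex) set" where
  "amalgam n p s = {f. loc_int n f \<and> amalgam_norm n p s f < \<infinity>}"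

definition dil :: "nat \<Rightarrow> ennreal \<Rightarrow> real \<Rightarrow> ((nat \<Rightarrow> real) \<Rightarrow> complex) \<Rightarrow> (nat \<Rightarrow> real) \<Rightarrow> complex" where
  "dil n a r f x = complex_of_real (r powr (- real n * enn2real (inverse a)))
                     * f (restrict (\<lambda>i. x i / r) {..<n})"

definition block_decomp ::
  "nat \<Rightarrow> (nat \<Rightarrow> ennreal) \<Rightarrow> (nat \<Rightarrow> ennreal) \<Rightarrow> ennreal \<Rightarrow> ((nat \<Rightarrow> real) \<Rightarrow> complex)
     \<Rightarrow> (nat \<Rightarrow> complex) \<Rightarrow> (nat \<Rightarrow> real) \<Rightarrow> (nat \<Rightarrow> (nat \<Rightarrow> real) \<Rightarrow> complex) \<Rightarrow> bool" where
  "block_decomp n p s a f c r g \<longleftrightarrow>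
     (\<forall>j. 0 < r j \<and> g j \<in> amalgam n p s \<and> amalgam_norm n p s (g j) \<le> 1)
     \<and> summable (\<lambda>j. cmod (c j))
     \<and> (\<forall>R. ((\<lambda>N. \<integral>\<^sup>+ x. indicator (box_R n R) x *
                 ennreal (cmod (f x - (\<Sum>j<N. c j * dil n a (r j) (g j) x))) \<partial>Rn n)
             \<longlongrightarrow> 0) sequentially)"

definition Hspace :: "nat \<Rightarrow> (nat \<Rightarrow> ennreal) \<Rightarrow> (nat \<Rightarrow> ennreal) \<Rightarrow> ennreal \<Rightarrow> ((nat \<Rightarrow> real) \<Rightarrow> complex) set" where
  "Hspace n p s a = {f. loc_int n f \<and> (\<exists>c r g. block_decomp n p s a f c r g)}"

definition Hnorm :: "nat \<Rightarrow> (nat \<Rightarrow> ennreal) \<Rightarrow> (nat \<Rightarrow> ennreal) \<Rightarrow> ennreal \<Rightarrow> ((nat \<Rightarrow> real) \<Rightarrow> complex) \<Rightarrow> real" where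
  "Hnorm n p s a f = Inf {(\<Sum>j. cmod (c j)) | c r g. block_decomp n p s a f c r g}"

end

theory Submission
  imports Defs
begin


lemma epowr_top[simp]: "epowr top a = top" by (simp add: epowr_def)

lemma epowr_ennreal[simp]: "0 \<le> x \<Longrightarrow> epowr (ennreal x) a = ennreal (x powr a)"
  by (simp add: epowr_def)

lemma epowr_zero[simp]: "epowr 0 a = 0"
  by (simp add: epowr_def)

lemma epowr_one[simp]: "epowr x 1 = x"
  by (cases x rule: ennreal_cases) auto

lemma epowr_mono: assumes xy: "x \<le> y" and a: "0 \<le> a" shows "epowr x a \<le> epowr y a"
proof (cases "y = top")
  case False
  then obtain r where r: "y = ennreal r" "0 \<le> r" by (cases y rule: ennreal_cases) auto
  have "x \<noteq> top" using xy False by (metis top.extremum_unique)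
  then obtain x' where x': "x = ennreal x'" "0 \<le> x'" by (cases x rule: ennreal_cases) auto
  have "x' \<le> r" using xy r x' by (simp add: ennreal_le_iff)
  then have "x' powr a \<le> r powr a" using x' a by (simp add: powr_mono2)
  then show ?thesis using r x' by simp
qed simp

lemma epowr_mult: "c < top \<Longrightarrow> epowr (c * x) a = epowr c a * epowr x a"
proof (cases c rule: ennreal_cases)
  case (real c')
  show ?thesis
  proof (cases x rule: ennreal_cases)
    case (real x')
    have e: "c * x = ennreal (c' * x')" using real \<open>c = ennreal c'\<close> \<open>0 \<le> c'\<close> by (simp add: ennreal_mult)
    have "epowr (c * x) a = ennreal ((c' * x') powr a)" unfolding e
      by (rule epowr_ennreal) (use real \<open>0 \<le> c'\<close> in simp)
    also have "\<dots> = ennreal (c' powr a) * ennreal (x' powr a)"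
      using real \<open>0 \<le> c'\<close> by (simp add: powr_mult ennreal_mult)
    finally show ?thesis using real \<open>c = ennreal c'\<close> \<open>0 \<le> c'\<close> by simp
  next
    case top
    then show ?thesis using \<open>c = ennreal c'\<close> \<open>0 \<le> c'\<close>
      by (cases "c' = 0") (auto simp: ennreal_mult_top)
  qed
qed simp

lemma epowr_epowr: "0 \<le> a \<Longrightarrow> epowr (epowr x a) b = epowr x (a * b)"
proof (cases x rule: ennreal_cases)
  case (real r)
  have "0 \<le> r powr a" by simp
  then show ?thesis using real by (simp add: powr_powr)
qed simp

lemma epowr_less_top: "x < top \<Longrightarrow> epowr x a < top"
  by (cases x rule: ennreal_cases) auto

lemma borel_measurable_epowr[measurable]: "(\<lambda>x. epowr x a) \<in> borel_measurable borel"
  unfolding epowr_def by measurable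

lemma borel_measurable_epowr'[measurable (raw)]:
  "f \<in> borel_measurable M \<Longrightarrow> (\<lambda>x. epowr (f x) a) \<in> borel_measurable M"
  using measurable_compose[OF _ borel_measurable_epowr] by blast


lemma conv0:
  fixes x y l q :: real
  assumes "0 \<le> x" "0 \<le> y" "0 \<le> l" "l \<le> 1" "1 \<le> q"
  shows "(l * x + (1 - l) * y) powr q \<le> l * x powr q + (1 - l) * y powr q"
proof (cases "x = 0")
  case True
  show ?thesis
  proof (cases "1 - l = 0")
    case True then show ?thesis using \<open>x = 0\<close> by simp
  next
    case False
    then have "(1 - l) powr q \<le> 1 - l" using assms powr_le_one_le[of "1 - l" q] by simp
    then have "(1 - l) powr q * y powr q \<le> (1 - l) * y powr q"
      by (rule mult_right_mono) simp
    then show ?thesis using True assms by (simp add: powr_mult)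
  qed
next
  case x: False
  show ?thesis
  proof (cases "y = 0")
    case True
    show ?thesis
    proof (cases "l = 0")
      case True then show ?thesis using \<open>y = 0\<close> by simp
    next
      case False
      then have "l powr q \<le> l" using assms powr_le_one_le[of l q] by simp
      then have "l powr q * x powr q \<le> l * x powr q"
        by (rule mult_right_mono) simp
      then show ?thesis using True assms by (simp add: powr_mult)
    qed
  next
    case y: False
    have c: "convex_on {0<..} (\<lambda>x::real. x powr q)" using powr_convex assms by blast
    have "((1 - (1 - l)) *\<^sub>R x + (1 - l) *\<^sub>R y) powr q \<le> (1 - (1 - l)) * x powr q + (1 - l) * y powr q"
      using convex_onD[OF c, of "1 - l" x y] assms x y by simp
    then show ?thesis by simp
  qed
qed

lemma real_key:
  fixes u v A B q :: real
  assumes u: "0 \<le> u" and v: "0 \<le> v" and A: "0 < A" and B: "0 < B" and q: "1 \<le> q"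
  shows "(u + v) powr q \<le> (A + B) powr (q - 1) * (A powr (1 - q) * u powr q + B powr (1 - q) * v powr q)"
proof -
  define l where "l = A / (A + B)"
  have l: "0 \<le> l" "l \<le> 1" "1 - l = B / (A + B)" using A B by (auto simp: l_def field_simps)
  have e1: "l * (u / A) = u / (A + B)" using A B by (simp add: l_def)
  have e2: "(1 - l) * (v / B) = v / (A + B)" using A B by (simp add: l(3))
  have eq: "(u + v) / (A + B) = l * (u / A) + (1 - l) * (v / B)"
    unfolding e1 e2 by (simp add: add_divide_distrib)
  have "((u + v) / (A + B)) powr q \<le> l * (u / A) powr q + (1 - l) * (v / B) powr q"
    unfolding eq by (rule conv0) (use u v A B l q in auto)
  then have "(u + v) powr q / (A + B) powr q \<le> l * (u powr q / A powr q) + (1 - l) * (v powr q / B powr q)"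
    using u v A B by (simp add: powr_divide)
  then have "(u + v) powr q \<le> (A + B) powr q * (l * (u powr q / A powr q) + (1 - l) * (v powr q / B powr q))"
    using A B by (simp add: divide_le_eq mult.commute)
  also have "(A + B) powr q * (l * (u powr q / A powr q) + (1 - l) * (v powr q / B powr q))
      = (A + B) powr q / (A + B) * (A / A powr q * u powr q + B / B powr q * v powr q)"
    unfolding l(3) unfolding l_def by (simp add: divide_inverse algebra_simps)
  also have "(A + B) powr q / (A + B) = (A + B) powr (q - 1)"
    using A B by (simp add: powr_diff)
  also have "A / A powr q = A powr (1 - q)" using A by (simp add: powr_diff)
  also have "B / B powr q = B powr (1 - q)" using B by (simp add: powr_diff)
  finally show ?thesis .
qed

lemma ennreal_key:
  fixes u v :: ennreal and A B q :: real
  assumes A: "0 < A" and B: "0 < B" and q: "1 \<le> q"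
  shows "epowr (u + v) q \<le> ennreal ((A + B) powr (q - 1)) *
            (ennreal (A powr (1 - q)) * epowr u q + ennreal (B powr (1 - q)) * epowr v q)"
proof (cases "u = top \<or> v = top")
  case True
  have p1: "ennreal ((A + B) powr (q - 1)) \<noteq> 0" "ennreal (A powr (1 - q)) \<noteq> 0"
     "ennreal (B powr (1 - q)) \<noteq> 0" using A B by auto
  from True show ?thesis
    using p1 by (auto simp: ennreal_mult_top)
next
  case False
  then obtain u' v' where uv: "u = ennreal u'" "v = ennreal v'" "0 \<le> u'" "0 \<le> v'"
    by (metis ennreal_cases)
  have "(u' + v') powr q \<le> (A + B) powr (q - 1) * (A powr (1 - q) * u' powr q + B powr (1 - q) * v' powr q)"
    by (rule real_key) (use uv A B q in auto)
  then have "ennreal ((u' + v') powr q) \<le> ennreal ((A + B) powr (q - 1) * (A powr (1 - q) * u' powr q + B powr (1 - q) * v' powr q))"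
    by (rule ennreal_leI)
  also have "\<dots> = ennreal ((A + B) powr (q - 1)) *
            (ennreal (A powr (1 - q)) * ennreal (u' powr q) + ennreal (B powr (1 - q)) * ennreal (v' powr q))"
    by (simp add: ennreal_mult ennreal_plus)
  finally show ?thesis using uv by (simp flip: ennreal_plus)
qed

lemma lp_norm_fin: "p \<noteq> top \<Longrightarrow> lp_norm M p g = epowr (\<integral>\<^sup>+x. epowr (g x) (enn2real p) \<partial>M) (1 / enn2real p)"
  by (simp add: lp_norm_def)

lemma lp_norm_top: "lp_norm M top g = esssup M g"
  by (simp add: lp_norm_def)

lemma fin_exp: assumes "1 \<le> p" "p \<noteq> top" shows "1 \<le> enn2real p" "p = ennreal (enn2real p)"
proof -
  obtain r where r: "p = ennreal r" "0 \<le> r" using assms(2) by (cases p rule: ennreal_cases) auto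
  then have "1 \<le> r" using assms(1) by simp
  then show "1 \<le> enn2real p" "p = ennreal (enn2real p)" using r by auto
qed

lemma lp_norm_mono:
  assumes p: "1 \<le> p" and f: "f \<in> borel_measurable M" and le: "\<And>t. t \<in> space M \<Longrightarrow> f t \<le> g t"
  shows "lp_norm M p f \<le> lp_norm M p g"
proof (cases "p = top")
  case True
  then show ?thesis using f le by (simp add: lp_norm_top esssup_AE_mono AE_I2)
next
  case False
  have q: "1 \<le> enn2real p" using fin_exp[OF p False] by simp
  have "(\<integral>\<^sup>+x. epowr (f x) (enn2real p) \<partial>M) \<le> (\<integral>\<^sup>+x. epowr (g x) (enn2real p) \<partial>M)"
    by (rule nn_integral_mono) (use q le in \<open>auto intro!: epowr_mono\<close>)
  then show ?thesis unfolding lp_norm_fin[OF False] by (rule epowr_mono) (use q in simp)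
qed

lemma lp_norm_cmult:
  assumes p: "1 \<le> p" and f[measurable]: "f \<in> borel_measurable M" and c: "c < top"
  shows "lp_norm M p (\<lambda>t. c * f t) \<le> c * lp_norm M p f"
proof (cases "p = top")
  case True
  have "AE t in M. c * f t \<le> c * esssup M f"
    using esssup_AE[of f M] by eventually_elim (rule mult_left_mono, auto)
  then show ?thesis using True by (simp add: lp_norm_top esssup_I)
next
  case False
  define q where "q = enn2real p"
  have q: "1 \<le> q" using fin_exp[OF p False] by (simp add: q_def)
  have "(\<integral>\<^sup>+x. epowr (c * f x) q \<partial>M) = (\<integral>\<^sup>+x. epowr c q * epowr (f x) q \<partial>M)"
    using c by (simp add: epowr_mult)
  also have "\<dots> = epowr c q * (\<integral>\<^sup>+x. epowr (f x) q \<partial>M)"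
    by (rule nn_integral_cmult) measurable
  finally have e: "(\<integral>\<^sup>+x. epowr (c * f x) q \<partial>M) = epowr c q * (\<integral>\<^sup>+x. epowr (f x) q \<partial>M)" .
  have "epowr (epowr c q * (\<integral>\<^sup>+x. epowr (f x) q \<partial>M)) (1 / q)
       = epowr (epowr c q) (1 / q) * epowr (\<integral>\<^sup>+x. epowr (f x) q \<partial>M) (1 / q)"
    by (rule epowr_mult) (use c in \<open>simp add: epowr_less_top\<close>)
  also have "epowr (epowr c q) (1 / q) = c" using q by (simp add: epowr_epowr)
  finally show ?thesis unfolding lp_norm_fin[OF False] q_def[symmetric] e by simp
qed

lemma lp_norm_zero:
  assumes p: "1 \<le> p" shows "lp_norm M p (\<lambda>_. 0) = 0"
proof (cases "p = top")
  case True
  have "esssup M (\<lambda>_. 0::ennreal) \<le> 0" by (rule esssup_I) auto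
  then show ?thesis using True by (simp add: lp_norm_top)
next
  case False
  have q: "1 \<le> enn2real p" using fin_exp[OF p False] by simp
  then show ?thesis unfolding lp_norm_fin[OF False] by simp
qed

lemma lp_norm_add:
  assumes p: "1 \<le> p" and f[measurable]: "f \<in> borel_measurable M" and g[measurable]: "g \<in> borel_measurable M"
  shows "lp_norm M p (\<lambda>t. f t + g t) \<le> lp_norm M p f + lp_norm M p g"
proof (cases "p = top")
  case True
  have "AE t in M. f t + g t \<le> esssup M f + esssup M g"
    using esssup_AE[of f M] esssup_AE[of g M] by eventually_elim (rule add_mono)
  then show ?thesis using True by (simp add: lp_norm_top esssup_I)
next
  case False
  define q where "q = enn2real p"
  have q: "1 \<le> q" using fin_exp[OF p False] by (simp add: q_def)
  define If where "If = (\<integral>\<^sup>+x. epowr (f x) q \<partial>M)"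
  define Ig where "Ig = (\<integral>\<^sup>+x. epowr (g x) q \<partial>M)"
  show ?thesis
  proof (cases "If = top \<or> Ig = top")
    case True
    then show ?thesis unfolding lp_norm_fin[OF False] q_def[symmetric] If_def[symmetric] Ig_def[symmetric]
      by auto
  next
    case False
    then obtain x y where xy: "If = ennreal x" "Ig = ennreal y" "0 \<le> x" "0 \<le> y"
      by (metis ennreal_cases)
    define a where "a = x powr (1 / q)"
    define b where "b = y powr (1 / q)"
    have ab: "0 \<le> a" "0 \<le> b" by (auto simp: a_def b_def)
    have xa: "x = a powr q" using xy q by (simp add: a_def powr_powr)
    have yb: "y = b powr q" using xy q by (simp add: b_def powr_powr)
    have R: "lp_norm M p f + lp_norm M p g = ennreal (a + b)"
      unfolding lp_norm_fin[OF \<open>p \<noteq> top\<close>] q_def[symmetric] If_def[symmetric] Ig_def[symmetric]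
      using xy ab by (simp add: a_def b_def ennreal_plus)
    show ?thesis unfolding R
    proof (rule ennreal_le_epsilon)
      fix e :: real assume e: "0 < e"
      define A where "A = a + e / 2"
      define B where "B = b + e / 2"
      have AB: "0 < A" "0 < B" using ab e by (auto simp: A_def B_def)
      define K where "K = (A + B) powr (q - 1)"
      define \<alpha> where "\<alpha> = A powr (1 - q)"
      define \<beta> where "\<beta> = B powr (1 - q)"
      have xA: "x \<le> A powr q" unfolding xa by (rule powr_mono2) (use q ab e in \<open>auto simp: A_def\<close>)
      have yB: "y \<le> B powr q" unfolding yb by (rule powr_mono2) (use q ab e in \<open>auto simp: B_def\<close>)
      have "(\<integral>\<^sup>+t. epowr (f t + g t) q \<partial>M) \<le>
          (\<integral>\<^sup>+t. ennreal K * (ennreal \<alpha> * epowr (f t) q + ennreal \<beta> * epowr (g t) q) \<partial>M)"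
        by (rule nn_integral_mono) (unfold K_def \<alpha>_def \<beta>_def, rule ennreal_key[OF AB q])
      also have "\<dots> = ennreal K * (ennreal \<alpha> * If + ennreal \<beta> * Ig)"
        unfolding If_def Ig_def
        by (subst nn_integral_cmult, measurable, subst nn_integral_add, measurable,
            simp add: nn_integral_cmult)
      also have "\<dots> \<le> ennreal K * (ennreal \<alpha> * ennreal (A powr q) + ennreal \<beta> * ennreal (B powr q))"
        unfolding xy using xA yB by (intro mult_left_mono add_mono) auto
      also have "\<dots> = ennreal (K * (\<alpha> * A powr q + \<beta> * B powr q))"
        by (simp add: K_def \<alpha>_def \<beta>_def ennreal_mult ennreal_plus)
      also have "K * (\<alpha> * A powr q + \<beta> * B powr q) = (A + B) powr q"
      proof -
        have "\<alpha> * A powr q = A" using AB by (simp add: \<alpha>_def flip: powr_add)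
        moreover have "\<beta> * B powr q = B" using AB by (simp add: \<beta>_def flip: powr_add)
        moreover have "(A + B) powr (q - 1) * (A + B) = (A + B) powr q"
          using AB by (simp add: powr_diff)
        ultimately show ?thesis by (simp add: K_def)
      qed
      finally have I: "(\<integral>\<^sup>+t. epowr (f t + g t) q \<partial>M) \<le> ennreal ((A + B) powr q)" .
      have "lp_norm M p (\<lambda>t. f t + g t) \<le> epowr (ennreal ((A + B) powr q)) (1 / q)"
        unfolding lp_norm_fin[OF \<open>p \<noteq> top\<close>] q_def[symmetric]
        by (rule epowr_mono[OF I]) (use q in simp)
      also have "\<dots> = ennreal (A + B)" using AB q by (simp add: powr_powr)
      also have "\<dots> = ennreal (a + b) + ennreal e" using ab e by (simp add: A_def B_def flip: ennreal_plus)
      finally show "lp_norm M p (\<lambda>t. f t + g t) \<le> ennreal (a + b) + ennreal e" .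
    qed
  qed
qed


definition secmeas :: "'a measure \<Rightarrow> (nat \<Rightarrow> ennreal) \<Rightarrow> nat \<Rightarrow> ((nat \<Rightarrow> 'a) \<Rightarrow> ennreal) \<Rightarrow> bool" where
  "secmeas M p n g \<longleftrightarrow> (\<forall>k<n. \<forall>x\<in>space (PiM {..<n} (\<lambda>_. M)).
      (\<lambda>t. mixed_aux M p k g (x(k := t))) \<in> borel_measurable M)"

lemma upd_space:
  "x \<in> space (PiM {..<n} (\<lambda>_. M)) \<Longrightarrow> k < n \<Longrightarrow> t \<in> space M \<Longrightarrow> x(k := t) \<in> space (PiM {..<n} (\<lambda>_. M))"
  by (auto simp: space_PiM PiE_iff extensional_def)

lemma mixed_indep:
  "(\<And>i. k \<le> i \<Longrightarrow> x i = y i) \<Longrightarrow> mixed_aux M p k g x = mixed_aux M p k g y"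
proof (induction k arbitrary: x y)
  case 0
  then have "x = y" by auto
  then show ?case by simp
next
  case (Suc k)
  have "\<And>t. mixed_aux M p k g (x(k := t)) = mixed_aux M p k g (y(k := t))"
    by (rule Suc.IH) (use Suc.prems in auto)
  then show ?case by simp
qed

lemma mixed_mono:
  assumes p: "\<forall>i<n. 1 \<le> p i" and sg: "secmeas M p n g"
    and le: "\<And>x. x \<in> space (PiM {..<n} (\<lambda>_. M)) \<Longrightarrow> g x \<le> h x"
  shows "k \<le> n \<Longrightarrow> x \<in> space (PiM {..<n} (\<lambda>_. M)) \<Longrightarrow> mixed_aux M p k g x \<le> mixed_aux M p k h x"
proof (induction k arbitrary: x)
  case 0
  then show ?case using le by simp
next
  case (Suc k)
  have "lp_norm M (p k) (\<lambda>t. mixed_aux M p k g (x(k := t))) \<le> lp_norm M (p k) (\<lambda>t. mixed_aux M p k h (x(k := t)))"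
  proof (rule lp_norm_mono)
    show "(\<lambda>t. mixed_aux M p k g (x(k := t))) \<in> borel_measurable M" using sg Suc.prems by (auto simp: secmeas_def)
    show "mixed_aux M p k g (x(k := t)) \<le> mixed_aux M p k h (x(k := t))" if "t \<in> space M" for t
    proof -
      have kn: "k \<le> n" using Suc.prems(1) by simp
      have xs: "x(k:=t) \<in> space (PiM {..<n} (\<lambda>_. M))" using upd_space[OF Suc.prems(2) _ that] Suc.prems(1) by simp
      show ?thesis using Suc.IH[OF kn xs] .
    qed
  qed (use p Suc.prems in auto)
  then show ?case by simp
qed

lemma mixed_cmult:
  assumes p: "\<forall>i<n. 1 \<le> p i" and sg: "secmeas M p n g" and scg: "secmeas M p n (\<lambda>x. c * g x)"
    and c: "c < top"
  shows "k \<le> n \<Longrightarrow> x \<in> space (PiM {..<n} (\<lambda>_. M)) \<Longrightarrow> mixed_aux M p k (\<lambda>x. c * g x) x \<le> c * mixed_aux M p k g x"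
proof (induction k arbitrary: x)
  case 0
  then show ?case by simp
next
  case (Suc k)
  have "lp_norm M (p k) (\<lambda>t. mixed_aux M p k (\<lambda>x. c * g x) (x(k := t))) \<le> lp_norm M (p k) (\<lambda>t. c * mixed_aux M p k g (x(k := t)))"
  proof (rule lp_norm_mono)
    show "(\<lambda>t. mixed_aux M p k (\<lambda>x. c * g x) (x(k := t))) \<in> borel_measurable M" using scg Suc.prems by (auto simp: secmeas_def)
    show "mixed_aux M p k (\<lambda>x. c * g x) (x(k := t)) \<le> c * mixed_aux M p k g (x(k := t))" if "t \<in> space M" for t
    proof -
      have kn: "k \<le> n" using Suc.prems(1) by simp
      have xs: "x(k:=t) \<in> space (PiM {..<n} (\<lambda>_. M))" using upd_space[OF Suc.prems(2) _ that] Suc.prems(1) by simp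
      show ?thesis using Suc.IH[OF kn xs] .
    qed
  qed (use p Suc.prems in auto)
  also have "\<dots> \<le> c * lp_norm M (p k) (\<lambda>t. mixed_aux M p k g (x(k := t)))"
    by (rule lp_norm_cmult) (use p sg Suc c in \<open>auto simp: secmeas_def\<close>)
  finally show ?case by simp
qed

lemma mixed_add:
  assumes p: "\<forall>i<n. 1 \<le> p i" and sg: "secmeas M p n g" and sh: "secmeas M p n h"
    and sgh: "secmeas M p n (\<lambda>x. g x + h x)"
  shows "k \<le> n \<Longrightarrow> x \<in> space (PiM {..<n} (\<lambda>_. M)) \<Longrightarrow>
    mixed_aux M p k (\<lambda>x. g x + h x) x \<le> mixed_aux M p k g x + mixed_aux M p k h x"
proof (induction k arbitrary: x)
  case 0
  then show ?case by simp
next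
  case (Suc k)
  have "lp_norm M (p k) (\<lambda>t. mixed_aux M p k (\<lambda>x. g x + h x) (x(k := t))) \<le>
        lp_norm M (p k) (\<lambda>t. mixed_aux M p k g (x(k := t)) + mixed_aux M p k h (x(k := t)))"
  proof (rule lp_norm_mono)
    show "(\<lambda>t. mixed_aux M p k (\<lambda>x. g x + h x) (x(k := t))) \<in> borel_measurable M" using sgh Suc.prems by (auto simp: secmeas_def)
    show "mixed_aux M p k (\<lambda>x. g x + h x) (x(k := t)) \<le> mixed_aux M p k g (x(k := t)) + mixed_aux M p k h (x(k := t))" if "t \<in> space M" for t
    proof -
      have kn: "k \<le> n" using Suc.prems(1) by simp
      have xs: "x(k:=t) \<in> space (PiM {..<n} (\<lambda>_. M))" using upd_space[OF Suc.prems(2) _ that] Suc.prems(1) by simp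
      show ?thesis using Suc.IH[OF kn xs] .
    qed
  qed (use p Suc.prems in auto)
  also have "\<dots> \<le> lp_norm M (p k) (\<lambda>t. mixed_aux M p k g (x(k := t))) + lp_norm M (p k) (\<lambda>t. mixed_aux M p k h (x(k := t)))"
    by (rule lp_norm_add) (use p sg sh Suc in \<open>auto simp: secmeas_def\<close>)
  finally show ?case by simp
qed

lemma mixed_zero:
  assumes p: "\<forall>i<n. 1 \<le> p i"
  shows "k \<le> n \<Longrightarrow> mixed_aux M p k (\<lambda>_. 0) x = 0"
proof (induction k arbitrary: x)
  case 0
  then show ?case by simp
next
  case (Suc k)
  then have "1 \<le> p k" using p by simp
  then show ?case using Suc lp_norm_zero[of "p k" M] by simp
qed

lemma mixed_sum:
  assumes p: "\<forall>i<n. 1 \<le> p i" and fin: "finite E"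
    and sm: "\<And>F. F \<subseteq> E \<Longrightarrow> secmeas M p n (\<lambda>x. \<Sum>e\<in>F. g e x)"
    and k: "k \<le> n" and x: "x \<in> space (PiM {..<n} (\<lambda>_. M))"
  shows "mixed_aux M p k (\<lambda>x. \<Sum>e\<in>E. g e x) x \<le> (\<Sum>e\<in>E. mixed_aux M p k (g e) x)"
  using fin sm
proof (induction E rule: finite_induct)
  case empty
  then show ?case using mixed_zero[OF p k] by simp
next
  case (insert e F)
  have s1: "secmeas M p n (g e)" using insert.prems[of "{e}"] by simp
  have s2: "secmeas M p n (\<lambda>x. \<Sum>e\<in>F. g e x)" using insert.prems by auto
  have s3: "secmeas M p n (\<lambda>x. g e x + (\<Sum>e\<in>F. g e x))" using insert.prems[of "insert e F"] insert.hyps by simp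
  have "mixed_aux M p k (\<lambda>x. \<Sum>e\<in>insert e F. g e x) x = mixed_aux M p k (\<lambda>x. g e x + (\<Sum>e\<in>F. g e x)) x"
    using insert.hyps by simp
  also have "\<dots> \<le> mixed_aux M p k (g e) x + mixed_aux M p k (\<lambda>x. \<Sum>e\<in>F. g e x) x"
    using mixed_add[OF p s1 s2 s3 k x] by simp
  also have "\<dots> \<le> mixed_aux M p k (g e) x + (\<Sum>e\<in>F. mixed_aux M p k (g e) x)"
    using insert.IH insert.prems by (intro add_left_mono) auto
  finally show ?case using insert.hyps by simp
qed


lemma esssup_SUP_rat:
  fixes h :: "'a \<Rightarrow> ennreal"
  assumes h[measurable]: "h \<in> borel_measurable M"
  shows "esssup M h = (SUP q\<in>(UNIV::rat set). if emeasure M {t \<in> space M. h t > ennreal (real_of_rat q)} \<noteq> 0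
                         then ennreal (real_of_rat q) else 0)" (is "_ = ?S")
proof (rule antisym)
  show "esssup M h \<le> ?S"
  proof (rule ccontr)
    assume "\<not> esssup M h \<le> ?S"
    then have "?S < esssup M h" by simp
    then obtain r :: rat where r: "?S < ennreal (real_of_rat r)" "ennreal (real_of_rat r) < esssup M h"
      using ennreal_rat_dense by blast
    have "emeasure M {t \<in> space M. h t > ennreal (real_of_rat r)} > 0"
      using esssup_pos_measure[OF h r(2)] .
    then have "ennreal (real_of_rat r) \<le> ?S"
      by (intro SUP_upper2[of r]) auto
    then show False using r(1) by simp
  qed
next
  show "?S \<le> esssup M h"
  proof (rule SUP_least)
    fix q :: rat
    show "(if emeasure M {t \<in> space M. h t > ennreal (real_of_rat q)} \<noteq> 0
            then ennreal (real_of_rat q) else 0) \<le> esssup M h"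
    proof (cases "ennreal (real_of_rat q) \<le> esssup M h")
      case False
      then have sub: "{t \<in> space M. h t > ennreal (real_of_rat q)} \<subseteq> {t \<in> space M. h t > esssup M h}"
        by auto
      have "emeasure M {t \<in> space M. h t > ennreal (real_of_rat q)} \<le> emeasure M {t \<in> space M. h t > esssup M h}"
        by (rule emeasure_mono[OF sub]) measurable
      then have "emeasure M {t \<in> space M. h t > ennreal (real_of_rat q)} = 0"
        using esssup_zero_measure[of M h] by simp
      then show ?thesis by simp
    qed simp
  qed
qed

lemma esssup_param_meas:
  fixes F :: "'b \<Rightarrow> 'a \<Rightarrow> ennreal"
  assumes sf: "sigma_finite_measure M"
    and F[measurable]: "(\<lambda>(x, t). F x t) \<in> borel_measurable (N \<Otimes>\<^sub>M M)"
  shows "(\<lambda>x. esssup M (F x)) \<in> borel_measurable N"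
proof -
  have sec: "F x \<in> borel_measurable M" if "x \<in> space N" for x
    using measurable_Pair2[OF F that] by simp
  define T where "T q x = (if emeasure M {t \<in> space M. F x t > ennreal (real_of_rat q)} \<noteq> 0
                         then ennreal (real_of_rat q) else 0)" for q x
  have eq: "esssup M (F x) = (SUP q\<in>(UNIV::rat set). T q x)" if "x \<in> space N" for x
    unfolding T_def by (rule esssup_SUP_rat[OF sec[OF that]])
  have em: "(\<lambda>x. emeasure M {t \<in> space M. F x t > c}) \<in> borel_measurable N" for c
  proof -
    define Q where "Q = {xt \<in> space (N \<Otimes>\<^sub>M M). (\<lambda>(x, t). F x t) xt > c}"
    have Q: "Q \<in> sets (N \<Otimes>\<^sub>M M)" unfolding Q_def by measurable
    have "(\<lambda>x. emeasure M (Pair x -` Q)) \<in> borel_measurable N"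
      by (rule sigma_finite_measure.measurable_emeasure_Pair[OF sf Q])
    moreover have "Pair x -` Q = {t \<in> space M. F x t > c}" if "x \<in> space N" for x
      using that by (auto simp: Q_def space_pair_measure)
    ultimately show ?thesis by (simp cong: measurable_cong)
  qed
  have Tm: "T q \<in> borel_measurable N" for q
    unfolding T_def using em[of "ennreal (real_of_rat q)"] by measurable
  have "(\<lambda>x. SUP q\<in>(UNIV::rat set). T q x) \<in> borel_measurable N"
    by (rule borel_measurable_SUP) (auto intro: Tm)
  then show ?thesis using eq by (simp cong: measurable_cong)
qed

lemma lp_norm_param_meas:
  fixes F :: "'b \<Rightarrow> 'a \<Rightarrow> ennreal"
  assumes sf: "sigma_finite_measure M"
    and F[measurable]: "(\<lambda>(x, t). F x t) \<in> borel_measurable (N \<Otimes>\<^sub>M M)"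
  shows "(\<lambda>x. lp_norm M p (F x)) \<in> borel_measurable N"
proof (cases "p = top")
  case True
  then show ?thesis using esssup_param_meas[OF sf F] by (simp add: lp_norm_top)
next
  case False
  have "(\<lambda>(x, t). epowr (F x t) (enn2real p)) \<in> borel_measurable (N \<Otimes>\<^sub>M M)"
    using borel_measurable_epowr'[OF F] by (simp add: case_prod_beta')
  then have "(\<lambda>x. \<integral>\<^sup>+t. epowr (F x t) (enn2real p) \<partial>M) \<in> borel_measurable N"
    by (rule sigma_finite_measure.borel_measurable_nn_integral[OF sf])
  then show ?thesis unfolding lp_norm_fin[OF False] by measurable
qed

lemma upd_meas2:
  assumes "k < n"
  shows "(\<lambda>(x, t). x(k := t)) \<in> measurable (PiM {..<n} (\<lambda>_. M) \<Otimes>\<^sub>M M) (PiM {..<n} (\<lambda>_. M))"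
proof -
  have "insert k {..<n} = {..<n}" using assms by auto
  then show ?thesis using measurable_add_dim[of k "{..<n}" "\<lambda>_. M"] by simp
qed

lemma mixed_meas:
  assumes sf: "sigma_finite_measure M" and g: "g \<in> borel_measurable (PiM {..<n} (\<lambda>_. M))"
  shows "k \<le> n \<Longrightarrow> mixed_aux M p k g \<in> borel_measurable (PiM {..<n} (\<lambda>_. M))"
proof (induction k)
  case 0
  then show ?case using g by simp
next
  case (Suc k)
  then have k: "k < n" and G: "mixed_aux M p k g \<in> borel_measurable (PiM {..<n} (\<lambda>_. M))" by auto
  have "(\<lambda>(x, t). mixed_aux M p k g (x(k := t))) \<in> borel_measurable (PiM {..<n} (\<lambda>_. M) \<Otimes>\<^sub>M M)"
    using measurable_compose[OF upd_meas2[OF k] G] by (simp add: case_prod_beta' split_beta)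
  then have "(\<lambda>x. lp_norm M (p k) (\<lambda>t. mixed_aux M p k g (x(k := t)))) \<in> borel_measurable (PiM {..<n} (\<lambda>_. M))"
    by (rule lp_norm_param_meas[OF sf])
  then show ?case by simp
qed

lemma upd_meas1:
  assumes "k < n" "x \<in> space (PiM {..<n} (\<lambda>_. M))"
  shows "(\<lambda>t. x(k := t)) \<in> measurable M (PiM {..<n} (\<lambda>_. M))"
proof -
  have "(\<lambda>t. ((\<lambda>_. x) t)(k := (\<lambda>t. t) t)) \<in> measurable M (PiM {..<n} (\<lambda>_. M))"
    by (rule measurable_fun_upd[where J="{..<n}"]) (use assms in auto)
  then show ?thesis by simp
qed

lemma meas_secmeas:
  assumes sf: "sigma_finite_measure M" and g: "g \<in> borel_measurable (PiM {..<n} (\<lambda>_. M))"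
  shows "secmeas M p n g"
  unfolding secmeas_def
proof (intro allI impI ballI)
  fix k x assume k: "k < n" and x: "x \<in> space (PiM {..<n} (\<lambda>_. M))"
  show "(\<lambda>t. mixed_aux M p k g (x(k := t))) \<in> borel_measurable M"
    using measurable_compose[OF upd_meas1[OF k x] mixed_meas[OF sf g, of k p]] k by simp
qed


lemma undef_space: "space M = UNIV \<Longrightarrow> (\<lambda>_. undefined) \<in> space (PiM {..<n} (\<lambda>_. M))"
  by (auto simp: space_PiM PiE_iff extensional_def)

lemma mnorm_mono:
  assumes p: "\<forall>i<n. 1 \<le> p i" and sp: "space M = UNIV" and sh: "secmeas M p n h"
    and le: "\<And>x. x \<in> space (PiM {..<n} (\<lambda>_. M)) \<Longrightarrow> h x \<le> a x"
  shows "mixed_norm M p n h \<le> mixed_norm M p n a"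
  unfolding mixed_norm_def by (rule mixed_mono[OF p sh le order.refl undef_space[OF sp]])

lemma mnorm_le_add:
  assumes p: "\<forall>i<n. 1 \<le> p i" and sp: "space M = UNIV"
    and sh: "secmeas M p n h" and sa: "secmeas M p n a" and sb: "secmeas M p n b"
    and sab: "secmeas M p n (\<lambda>x. a x + b x)"
    and le: "\<And>x. x \<in> space (PiM {..<n} (\<lambda>_. M)) \<Longrightarrow> h x \<le> a x + b x"
  shows "mixed_norm M p n h \<le> mixed_norm M p n a + mixed_norm M p n b"
proof -
  have "mixed_norm M p n h \<le> mixed_norm M p n (\<lambda>x. a x + b x)"
    by (rule mnorm_mono[OF p sp sh le])
  also have "\<dots> \<le> mixed_norm M p n a + mixed_norm M p n b"
    unfolding mixed_norm_def by (rule mixed_add[OF p sa sb sab order.refl undef_space[OF sp]])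
  finally show ?thesis .
qed

lemma mnorm_le_cmult:
  assumes p: "\<forall>i<n. 1 \<le> p i" and sp: "space M = UNIV"
    and sh: "secmeas M p n h" and sa: "secmeas M p n a" and sca: "secmeas M p n (\<lambda>x. c * a x)"
    and c: "c < top"
    and le: "\<And>x. x \<in> space (PiM {..<n} (\<lambda>_. M)) \<Longrightarrow> h x \<le> c * a x"
  shows "mixed_norm M p n h \<le> c * mixed_norm M p n a"
proof -
  have "mixed_norm M p n h \<le> mixed_norm M p n (\<lambda>x. c * a x)"
    by (rule mnorm_mono[OF p sp sh le])
  also have "\<dots> \<le> c * mixed_norm M p n a"
    unfolding mixed_norm_def by (rule mixed_cmult[OF p sa sca c order.refl undef_space[OF sp]])
  finally show ?thesis .
qed

lemma mnorm_le_sum: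
  assumes p: "\<forall>i<n. 1 \<le> p i" and sp: "space M = UNIV" and fin: "finite E"
    and sh: "secmeas M p n h"
    and sm: "\<And>F. F \<subseteq> E \<Longrightarrow> secmeas M p n (\<lambda>x. \<Sum>e\<in>F. g e x)"
    and le: "\<And>x. x \<in> space (PiM {..<n} (\<lambda>_. M)) \<Longrightarrow> h x \<le> (\<Sum>e\<in>E. g e x)"
  shows "mixed_norm M p n h \<le> (\<Sum>e\<in>E. mixed_norm M p n (g e))"
proof -
  have "mixed_norm M p n h \<le> mixed_norm M p n (\<lambda>x. \<Sum>e\<in>E. g e x)"
    by (rule mnorm_mono[OF p sp sh le])
  also have "\<dots> \<le> (\<Sum>e\<in>E. mixed_norm M p n (g e))"
    unfolding mixed_norm_def by (rule mixed_sum[OF p fin sm order.refl undef_space[OF sp]])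
  finally show ?thesis .
qed

lemma mnorm_zero:
  assumes p: "\<forall>i<n. 1 \<le> p i"
  shows "mixed_norm M p n (\<lambda>_. 0) = 0"
  unfolding mixed_norm_def by (rule mixed_zero[OF p order.refl])

lemma secmeas_count: "secmeas (count_space UNIV) p n g"
  unfolding secmeas_def by auto

lemma secmeas_leb: "h \<in> borel_measurable (Rn n) \<Longrightarrow> secmeas lborel p n h"
  by (rule meas_secmeas[OF sigma_finite_lborel])

lemma space_Rn: "x \<in> space (Rn n) \<longleftrightarrow> (\<forall>i. i \<ge> n \<longrightarrow> x i = undefined)"
  by (auto simp: space_PiM PiE_iff extensional_def)

lemma loc_int_meas:
  assumes "loc_int n f" shows "f \<in> borel_measurable (Rn n)"
proof -
  define g where "g N x = indicator (box_R n (real N)) x *\<^sub>R f x" for N x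
  have gm: "g N \<in> borel_measurable (Rn n)" for N
    using assms unfolding loc_int_def set_integrable_def g_def
    by (intro borel_measurable_integrable) auto
  show ?thesis
  proof (rule borel_measurable_LIMSEQ_metric[OF gm])
    fix x assume x: "x \<in> space (Rn n)"
    obtain N0 :: nat where N0: "(\<Sum>i<n. \<bar>x i\<bar>) \<le> real N0" using real_arch_simple by blast
    have "g N x = f x" if "N \<ge> N0" for N
    proof -
      have "\<bar>x i\<bar> \<le> real N" if "i < n" for i
      proof -
        have "\<bar>x i\<bar> \<le> (\<Sum>i<n. \<bar>x i\<bar>)" by (rule member_le_sum) (use that in auto)
        also have "\<dots> \<le> real N" using N0 \<open>N \<ge> N0\<close> by linarith
        finally show ?thesis .
      qed
      then have "x \<in> box_R n (real N)" using x by (auto simp: box_R_def)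
      then show ?thesis by (simp add: g_def)
    qed
    then show "(\<lambda>N. g N x) \<longlonglongrightarrow> f x"
      by (intro tendsto_eventually) (auto simp: eventually_sequentially)
  qed
qed

lemma loc_int_add: "loc_int n f \<Longrightarrow> loc_int n g \<Longrightarrow> loc_int n (\<lambda>x. f x + g x)"
  unfolding loc_int_def set_integrable_def by (auto simp: scaleR_add_right)

lemma loc_int_cmult: "loc_int n f \<Longrightarrow> loc_int n (\<lambda>x. c * f x)"
  unfolding loc_int_def by (auto intro!: set_integrable_mult_right)

lemma loc_int_zero: "loc_int n (\<lambda>_. 0)"
  unfolding loc_int_def set_integrable_def by simp

lemma cube_sets[measurable]: "cube n k \<in> sets (Rn n)"
proof -
  have "cube n k = space (Rn n) \<inter> (\<Inter>i<n. {x \<in> space (Rn n). real_of_int (k i) \<le> x i \<and> x i < real_of_int (k i) + 1})"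
    by (auto simp: cube_def)
  also have "\<dots> \<in> sets (Rn n)" by measurable
  finally show ?thesis .
qed

definition LQ :: "nat \<Rightarrow> (nat \<Rightarrow> ennreal) \<Rightarrow> ((nat \<Rightarrow> real) \<Rightarrow> complex) \<Rightarrow> (nat \<Rightarrow> int) \<Rightarrow> ennreal" where
  "LQ n p f k = Lmixed_norm n p (\<lambda>x. indicator (cube n k) x * f x)"

lemma amalgam_norm_LQ: "amalgam_norm n p s f = mixed_norm (count_space UNIV) s n (LQ n p f)"
  unfolding amalgam_norm_def by (simp add: LQ_def[abs_def])

lemma LQ_add:
  assumes p: "\<forall>i<n. 1 \<le> p i" and f[measurable]: "f \<in> borel_measurable (Rn n)" and g[measurable]: "g \<in> borel_measurable (Rn n)"
  shows "LQ n p (\<lambda>x. f x + g x) k \<le> LQ n p f k + LQ n p g k"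
  unfolding LQ_def Lmixed_norm_def
proof (rule mnorm_le_add[OF p])
  show "cmod (indicator (cube n k) x * (f x + g x)) \<le> ennreal (cmod (indicator (cube n k) x * f x)) + ennreal (cmod (indicator (cube n k) x * g x))" for x
  proof -
    have "cmod (indicator (cube n k) x * (f x + g x)) \<le> cmod (indicator (cube n k) x * f x) + cmod (indicator (cube n k) x * g x)"
      by (simp add: distrib_left norm_triangle_ineq)
    then show ?thesis by (simp add: ennreal_plus[symmetric] del: ennreal_plus)
  qed
qed (auto intro!: secmeas_leb)

lemma LQ_cmult:
  assumes p: "\<forall>i<n. 1 \<le> p i" and f[measurable]: "f \<in> borel_measurable (Rn n)"
  shows "LQ n p (\<lambda>x. c * f x) k \<le> ennreal (cmod c) * LQ n p f k"
  unfolding LQ_def Lmixed_norm_def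
proof (rule mnorm_le_cmult[OF p])
  show "ennreal (cmod (indicator (cube n k) x * (c * f x))) \<le> ennreal (cmod c) * ennreal (cmod (indicator (cube n k) x * f x))" for x
    by (simp add: ennreal_mult[symmetric] norm_mult del: ennreal_mult'')
qed (auto intro!: secmeas_leb)

lemma amalgam_norm_add:
  assumes p: "\<forall>i<n. 1 \<le> p i" and s: "\<forall>i<n. 1 \<le> s i"
    and f: "f \<in> borel_measurable (Rn n)" and g: "g \<in> borel_measurable (Rn n)"
  shows "amalgam_norm n p s (\<lambda>x. f x + g x) \<le> amalgam_norm n p s f + amalgam_norm n p s g"
  unfolding amalgam_norm_LQ
  by (rule mnorm_le_add[OF s]) (auto intro: secmeas_count LQ_add[OF p f g])

lemma amalgam_norm_cmult:
  assumes p: "\<forall>i<n. 1 \<le> p i" and s: "\<forall>i<n. 1 \<le> s i" and f: "f \<in> borel_measurable (Rn n)"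
  shows "amalgam_norm n p s (\<lambda>x. c * f x) \<le> ennreal (cmod c) * amalgam_norm n p s f"
  unfolding amalgam_norm_LQ
  by (rule mnorm_le_cmult[OF s]) (auto intro: secmeas_count LQ_cmult[OF p f])

lemma amalgam_norm_zero:
  assumes p: "\<forall>i<n. 1 \<le> p i" and s: "\<forall>i<n. 1 \<le> s i"
  shows "amalgam_norm n p s (\<lambda>_. 0) = 0"
proof -
  have "LQ n p (\<lambda>_. 0) = (\<lambda>_. 0)"
    by (rule ext) (simp add: LQ_def Lmixed_norm_def mnorm_zero[OF p])
  then show ?thesis unfolding amalgam_norm_LQ using mnorm_zero[OF s] by simp
qed

lemma amalgam_zero:
  assumes p: "\<forall>i<n. 1 \<le> p i" and s: "\<forall>i<n. 1 \<le> s i"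
  shows "(\<lambda>_. 0) \<in> amalgam n p s"
  using amalgam_norm_zero[OF p s] loc_int_zero by (simp add: amalgam_def)

lemma amalgam_add:
  assumes p: "\<forall>i<n. 1 \<le> p i" and s: "\<forall>i<n. 1 \<le> s i"
    and f: "f \<in> amalgam n p s" and g: "g \<in> amalgam n p s"
  shows "(\<lambda>x. f x + g x) \<in> amalgam n p s"
proof -
  have "amalgam_norm n p s (\<lambda>x. f x + g x) \<le> amalgam_norm n p s f + amalgam_norm n p s g"
    using f g by (intro amalgam_norm_add[OF p s] loc_int_meas) (auto simp: amalgam_def)
  also have "\<dots> < top" using f g by (auto simp: amalgam_def)
  finally show ?thesis using f g by (auto simp: amalgam_def intro: loc_int_add)
qed

lemma amalgam_cmult:
  assumes p: "\<forall>i<n. 1 \<le> p i" and s: "\<forall>i<n. 1 \<le> s i"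
    and f: "f \<in> amalgam n p s"
  shows "(\<lambda>x. c * f x) \<in> amalgam n p s"
proof -
  have "amalgam_norm n p s (\<lambda>x. c * f x) \<le> ennreal (cmod c) * amalgam_norm n p s f"
    using f by (intro amalgam_norm_cmult[OF p s] loc_int_meas) (auto simp: amalgam_def)
  also have "\<dots> < top" using f by (auto simp: amalgam_def ennreal_mult_less_top)
  finally show ?thesis using f by (auto simp: amalgam_def intro: loc_int_cmult)
qed


lemma powr_le_max: fixes r a :: real shows "0 < r \<Longrightarrow> 0 \<le> a \<Longrightarrow> a \<le> 1 \<Longrightarrow> r powr a \<le> max 1 r"
proof (cases "r \<le> 1")
  case True
  assume "0 < r" "0 \<le> a" "a \<le> 1"
  then have "r powr a \<le> 1 powr a" using True by (intro powr_mono2) auto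
  then show ?thesis by simp
next
  case False
  assume "0 < r" "0 \<le> a" "a \<le> 1"
  then have "r powr a \<le> r powr 1" using False by (intro powr_mono) auto
  then show ?thesis using False by simp
qed

lemma le_max_mult: "x \<le> ennreal (max 1 r) * (x::ennreal)"
proof -
  have "1 * x \<le> ennreal (max 1 r) * x" by (rule mult_right_mono) (auto simp: ennreal_ge_1)
  then show ?thesis by simp
qed

lemma lp_norm_scale:
  assumes p: "1 \<le> p" and r: "0 < r" and phi[measurable]: "phi \<in> borel_measurable lborel"
  shows "lp_norm lborel p (\<lambda>t. phi (t / r)) \<le> ennreal (max 1 r) * lp_norm lborel p phi"
proof (cases "p = top")
  case True
  have m: "(\<lambda>t. phi (t / r)) \<in> borel_measurable lborel" by measurable
  have pb: "Measurable.pred borel (\<lambda>x. phi x \<le> esssup lborel phi)" by measurable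
  have "AE x in lborel. phi x \<le> esssup lborel phi" by (rule esssup_AE)
  then have "AE x in lborel. phi (0 + (1 / r) * x) \<le> esssup lborel phi"
    by (intro AE_borel_affine pb) (use r in auto)
  then have "esssup lborel (\<lambda>t. phi (t / r)) \<le> esssup lborel phi"
    by (intro esssup_I m) simp
  also have "\<dots> \<le> ennreal (max 1 r) * esssup lborel phi" by (rule le_max_mult)
  finally show ?thesis using True by (simp add: lp_norm_top)
next
  case False
  define q where "q = enn2real p"
  have q: "1 \<le> q" using fin_exp[OF p False] by (simp add: q_def)
  have fm: "(\<lambda>t. epowr (phi (t / r)) q) \<in> borel_measurable borel" by measurable
  have "(\<integral>\<^sup>+t. epowr (phi (t / r)) q \<partial>lborel) = ennreal \<bar>r\<bar> * (\<integral>\<^sup>+x. epowr (phi ((0 + r * x) / r)) q \<partial>lborel)"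
    by (rule nn_integral_real_affine[OF fm]) (use r in auto)
  also have "\<dots> = ennreal r * (\<integral>\<^sup>+x. epowr (phi x) q \<partial>lborel)" using r by simp
  finally have e: "(\<integral>\<^sup>+t. epowr (phi (t / r)) q \<partial>lborel) = ennreal r * (\<integral>\<^sup>+x. epowr (phi x) q \<partial>lborel)" .
  have "epowr (ennreal r * (\<integral>\<^sup>+x. epowr (phi x) q \<partial>lborel)) (1 / q)
      = epowr (ennreal r) (1 / q) * epowr (\<integral>\<^sup>+x. epowr (phi x) q \<partial>lborel) (1 / q)"
    by (rule epowr_mult) simp
  also have "epowr (ennreal r) (1 / q) \<le> ennreal (max 1 r)"
    using r q powr_le_max[of r "1/q"] by (simp add: ennreal_leI)
  finally show ?thesis unfolding lp_norm_fin[OF False] q_def[symmetric] e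
    by (simp add: mult_right_mono)
qed

definition Dr :: "nat \<Rightarrow> real \<Rightarrow> (nat \<Rightarrow> real) \<Rightarrow> (nat \<Rightarrow> real)" where
  "Dr n r x = restrict (\<lambda>i. x i / r) {..<n}"

lemma Dr_meas[measurable]: "Dr n r \<in> measurable (Rn n) (Rn n)"
  unfolding Dr_def by measurable

lemma Dr_space: "Dr n r x \<in> space (Rn n)"
  by (auto simp: Dr_def space_PiM)

lemma Dr_upd: "k < n \<Longrightarrow> Dr n r (x(k := t)) = (Dr n r x)(k := t / r)"
  by (auto simp: Dr_def fun_eq_iff)

lemma mixed_scale:
  assumes p: "\<forall>i<n. 1 \<le> p i" and r: "0 < r" and H[measurable]: "H \<in> borel_measurable (Rn n)"
  shows "k \<le> n \<Longrightarrow> x \<in> space (Rn n) \<Longrightarrow>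
    mixed_aux lborel p k (\<lambda>x. H (Dr n r x)) x \<le> ennreal (max 1 r) ^ k * mixed_aux lborel p k H (Dr n r x)"
proof (induction k arbitrary: x)
  case 0
  then show ?case by simp
next
  case (Suc k)
  have k: "k < n" and kn: "k \<le> n" using Suc.prems by auto
  note x = Suc.prems(2)
  define c where "c = ennreal (max 1 r)"
  define G where "G = mixed_aux lborel p k H"
  have HD: "(\<lambda>x. H (Dr n r x)) \<in> borel_measurable (Rn n)" by measurable
  have s1: "(\<lambda>t. mixed_aux lborel p k (\<lambda>x. H (Dr n r x)) (x(k := t))) \<in> borel_measurable lborel"
    using secmeas_leb[OF HD, of p] k x by (auto simp: secmeas_def)
  have s2[measurable]: "(\<lambda>t. G ((Dr n r x)(k := t))) \<in> borel_measurable lborel"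
    using secmeas_leb[OF H, of p] k Dr_space[of n r x] by (auto simp: secmeas_def G_def)
  have s3: "(\<lambda>t. G ((Dr n r x)(k := t / r))) \<in> borel_measurable lborel"
    using measurable_compose[OF _ s2, of "\<lambda>t. t / r"] by simp
  have "lp_norm lborel (p k) (\<lambda>t. mixed_aux lborel p k (\<lambda>x. H (Dr n r x)) (x(k := t)))
      \<le> lp_norm lborel (p k) (\<lambda>t. c ^ k * G ((Dr n r x)(k := t / r)))"
  proof (rule lp_norm_mono[OF _ s1])
    show "1 \<le> p k" using p k by simp
    fix t :: real
    have xs: "x(k := t) \<in> space (Rn n)" using upd_space[OF x k] by simp
    show "mixed_aux lborel p k (\<lambda>x. H (Dr n r x)) (x(k := t)) \<le> c ^ k * G ((Dr n r x)(k := t / r))"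
      using Suc.IH[OF kn xs] unfolding Dr_upd[OF k] c_def G_def .
  qed
  also have "\<dots> \<le> c ^ k * lp_norm lborel (p k) (\<lambda>t. G ((Dr n r x)(k := t / r)))"
    by (rule lp_norm_cmult[OF _ s3]) (use p k in \<open>auto simp: c_def ennreal_power\<close>)
  also have "\<dots> \<le> c ^ k * (c * lp_norm lborel (p k) (\<lambda>t. G ((Dr n r x)(k := t))))"
    by (rule mult_left_mono, unfold c_def, rule lp_norm_scale[OF _ r s2]) (use p k in auto)
  finally show ?case by (simp add: G_def c_def mult.assoc mult.commute mult.left_commute)
qed

lemma mnorm_scale:
  assumes p: "\<forall>i<n. 1 \<le> p i" and r: "0 < r" and H[measurable]: "H \<in> borel_measurable (Rn n)"
  shows "mixed_norm lborel p n (\<lambda>x. H (Dr n r x)) \<le> ennreal (max 1 r) ^ n * mixed_norm lborel p n H"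
proof -
  have "mixed_aux lborel p n H (Dr n r (\<lambda>_. undefined)) = mixed_aux lborel p n H (\<lambda>_. undefined)"
    by (rule mixed_indep) (auto simp: Dr_def)
  then show ?thesis unfolding mixed_norm_def
    using mixed_scale[OF p r H order.refl undef_space[of lborel n]] by simp
qed

lemma count_reindex_nn:
  fixes psi :: "int \<Rightarrow> int" and g :: "int \<Rightarrow> ennreal"
  assumes fib: "\<And>j. finite {t. psi t = j} \<and> card {t. psi t = j} \<le> m"
  shows "(\<integral>\<^sup>+t. g (psi t) \<partial>count_space UNIV) \<le> of_nat m * (\<integral>\<^sup>+j. g j \<partial>count_space UNIV)"
proof -
  have e1: "g (psi t) = (\<integral>\<^sup>+j. g j * indicator {t'. psi t' = j} t \<partial>count_space UNIV)" for t
  proof -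
    have "(\<integral>\<^sup>+j. g j * indicator {t'. psi t' = j} t \<partial>count_space UNIV) = (\<Sum>j\<in>{psi t}. g j * indicator {t'. psi t' = j} t)"
      by (rule nn_integral_count_space') auto
    then show ?thesis by simp
  qed
  have "(\<integral>\<^sup>+t. g (psi t) \<partial>count_space UNIV) =
      (\<integral>\<^sup>+t. (\<integral>\<^sup>+j. g j * indicator {t'. psi t' = j} t \<partial>count_space UNIV) \<partial>count_space UNIV)"
    by (subst e1) (rule refl)
  also have "\<dots> = (\<integral>\<^sup>+j. (\<integral>\<^sup>+t. g j * indicator {t'. psi t' = j} t \<partial>count_space UNIV) \<partial>count_space UNIV)"
    by (rule nn_integral_count_space_nn_integral) auto
  also have "\<dots> = (\<integral>\<^sup>+j. g j * emeasure (count_space UNIV) {t'. psi t' = j} \<partial>count_space UNIV)"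
    by (rule nn_integral_cong) (simp add: nn_integral_cmult_indicator)
  also have "\<dots> \<le> (\<integral>\<^sup>+j. of_nat m * g j \<partial>count_space UNIV)"
  proof (rule nn_integral_mono)
    fix j
    have "emeasure (count_space UNIV) {t'. psi t' = j} = of_nat (card {t'. psi t' = j})"
      using fib[of j] by (simp add: emeasure_count_space_finite)
    also have "\<dots> \<le> of_nat m" using fib[of j] by simp
    finally have "g j * emeasure (count_space UNIV) {t'. psi t' = j} \<le> g j * of_nat m"
      by (rule mult_left_mono) simp
    then show "g j * emeasure (count_space UNIV) {t'. psi t' = j} \<le> of_nat m * g j"
      by (simp add: mult.commute)
  qed
  also have "\<dots> = of_nat m * (\<integral>\<^sup>+j. g j \<partial>count_space UNIV)"
    by (rule nn_integral_cmult) auto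
  finally show ?thesis .
qed

lemma lp_norm_reindex:
  fixes psi :: "int \<Rightarrow> int" and phi :: "int \<Rightarrow> ennreal"
  assumes p: "1 \<le> p" and fib: "\<And>j. finite {t. psi t = j} \<and> card {t. psi t = j} \<le> m" and m: "1 \<le> m"
  shows "lp_norm (count_space UNIV) p (\<lambda>t. phi (psi t)) \<le> ennreal (max 1 (real m)) * lp_norm (count_space UNIV) p phi"
proof (cases "p = top")
  case True
  have "AE x in count_space UNIV. phi x \<le> esssup (count_space UNIV) phi" by (rule esssup_AE)
  then have "\<forall>j. phi j \<le> esssup (count_space UNIV) phi" by (simp add: AE_count_space)
  then have "esssup (count_space UNIV) (\<lambda>t. phi (psi t)) \<le> esssup (count_space UNIV) phi"
    by (intro esssup_I) (auto simp: AE_count_space)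
  also have "\<dots> \<le> ennreal (max 1 (real m)) * esssup (count_space UNIV) phi" by (rule le_max_mult)
  finally show ?thesis using True by (simp add: lp_norm_top)
next
  case False
  define q where "q = enn2real p"
  have q: "1 \<le> q" using fin_exp[OF p False] by (simp add: q_def)
  have "(\<integral>\<^sup>+t. epowr (phi (psi t)) q \<partial>count_space UNIV) \<le> of_nat m * (\<integral>\<^sup>+j. epowr (phi j) q \<partial>count_space UNIV)"
    by (rule count_reindex_nn[OF fib])
  then have "epowr (\<integral>\<^sup>+t. epowr (phi (psi t)) q \<partial>count_space UNIV) (1 / q)
     \<le> epowr (of_nat m * (\<integral>\<^sup>+j. epowr (phi j) q \<partial>count_space UNIV)) (1 / q)"
    by (rule epowr_mono) (use q in simp)
  also have "\<dots> = epowr (ennreal (real m)) (1 / q) * epowr (\<integral>\<^sup>+j. epowr (phi j) q \<partial>count_space UNIV) (1 / q)"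
    by (subst epowr_mult) (auto simp: ennreal_of_nat_eq_real_of_nat)
  also have "epowr (ennreal (real m)) (1 / q) \<le> ennreal (max 1 (real m))"
    using m q powr_le_max[of "real m" "1/q"] by (simp add: ennreal_leI)
  finally show ?thesis unfolding lp_norm_fin[OF False] q_def[symmetric]
    by (simp add: mult_right_mono)
qed

definition Psi :: "nat \<Rightarrow> (nat \<Rightarrow> int \<Rightarrow> int) \<Rightarrow> (nat \<Rightarrow> int) \<Rightarrow> (nat \<Rightarrow> int)" where
  "Psi n psi k = (\<lambda>i. if i < n then psi i (k i) else k i)"

lemma Psi_upd: "k < n \<Longrightarrow> Psi n psi (x(k := t)) = (Psi n psi x)(k := psi k t)"
  by (auto simp: Psi_def fun_eq_iff)

lemma mixed_reindex:
  assumes s: "\<forall>i<n. 1 \<le> s i" and m: "1 \<le> m"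
    and fib: "\<And>i j. i < n \<Longrightarrow> finite {t. psi i t = j} \<and> card {t. psi i t = j} \<le> m"
  shows "k \<le> n \<Longrightarrow> mixed_aux (count_space UNIV) s k (\<lambda>x. b (Psi n psi x)) x
     \<le> ennreal (max 1 (real m)) ^ k * mixed_aux (count_space UNIV) s k b (Psi n psi x)"
proof (induction k arbitrary: x)
  case 0
  then show ?case by simp
next
  case (Suc k)
  have k: "k < n" and kn: "k \<le> n" using Suc.prems by auto
  define c where "c = ennreal (max 1 (real m))"
  define G where "G = mixed_aux (count_space UNIV) s k b"
  have "lp_norm (count_space UNIV) (s k) (\<lambda>t. mixed_aux (count_space UNIV) s k (\<lambda>x. b (Psi n psi x)) (x(k := t)))
      \<le> lp_norm (count_space UNIV) (s k) (\<lambda>t. c ^ k * G ((Psi n psi x)(k := psi k t)))"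
  proof (rule lp_norm_mono)
    show "1 \<le> s k" using s k by simp
    fix t :: int
    show "mixed_aux (count_space UNIV) s k (\<lambda>x. b (Psi n psi x)) (x(k := t)) \<le> c ^ k * G ((Psi n psi x)(k := psi k t))"
      using Suc.IH[OF kn, of "x(k := t)"] unfolding Psi_upd[OF k] c_def G_def .
  qed auto
  also have "\<dots> \<le> c ^ k * lp_norm (count_space UNIV) (s k) (\<lambda>t. G ((Psi n psi x)(k := psi k t)))"
    by (rule lp_norm_cmult) (use s k in \<open>auto simp: c_def ennreal_power\<close>)
  also have "\<dots> \<le> c ^ k * (c * lp_norm (count_space UNIV) (s k) (\<lambda>t. G ((Psi n psi x)(k := t))))"
    by (rule mult_left_mono, unfold c_def, rule lp_norm_reindex[OF _ fib[OF k] m]) (use s k in auto)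
  finally show ?case by (simp add: G_def c_def mult.assoc mult.commute mult.left_commute)
qed

lemma mnorm_reindex:
  assumes s: "\<forall>i<n. 1 \<le> s i" and m: "1 \<le> m"
    and fib: "\<And>i j. i < n \<Longrightarrow> finite {t. psi i t = j} \<and> card {t. psi i t = j} \<le> m"
  shows "mixed_norm (count_space UNIV) s n (\<lambda>x. b (Psi n psi x))
     \<le> ennreal (max 1 (real m)) ^ n * mixed_norm (count_space UNIV) s n b"
proof -
  have "mixed_aux (count_space UNIV) s n b (Psi n psi (\<lambda>_. undefined)) = mixed_aux (count_space UNIV) s n b (\<lambda>_. undefined)"
    by (rule mixed_indep) (auto simp: Psi_def)
  moreover have "mixed_aux (count_space UNIV) s n (\<lambda>x. b (Psi n psi x)) (\<lambda>_. undefined)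
     \<le> ennreal (max 1 (real m)) ^ n * mixed_aux (count_space UNIV) s n b (Psi n psi (\<lambda>_. undefined))"
    by (rule mixed_reindex[OF s m]) (use fib in auto)
  ultimately show ?thesis unfolding mixed_norm_def by simp
qed


lemma fiber_card:
  fixes r :: real and e j :: int
  assumes r: "0 < r"
  shows "finite {t::int. \<lfloor>real_of_int t / r\<rfloor> + e = j} \<and> card {t::int. \<lfloor>real_of_int t / r\<rfloor> + e = j} \<le> nat \<lceil>r\<rceil>"
proof -
  define a where "a = \<lceil>r * real_of_int (j - e)\<rceil>"
  have sub: "{t::int. \<lfloor>real_of_int t / r\<rfloor> + e = j} \<subseteq> {a..<a + \<lceil>r\<rceil>}"
  proof
    fix t assume "t \<in> {t::int. \<lfloor>real_of_int t / r\<rfloor> + e = j}"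
    then have "\<lfloor>real_of_int t / r\<rfloor> = j - e" by simp
    then have h: "real_of_int (j - e) \<le> real_of_int t / r" "real_of_int t / r < real_of_int (j - e) + 1"
      by linarith+
    have h1: "r * real_of_int (j - e) \<le> real_of_int t" using h(1) r by (simp add: field_simps)
    have h2: "real_of_int t < r * real_of_int (j - e) + r" using h(2) r by (simp add: field_simps)
    have "a \<le> t" unfolding a_def using h1 by (simp add: ceiling_le_iff)
    moreover have "real_of_int t < real_of_int a + real_of_int \<lceil>r\<rceil>"
      using h2 le_of_int_ceiling[of "r * real_of_int (j - e)"] le_of_int_ceiling[of r] unfolding a_def by linarith
    then have "t < a + \<lceil>r\<rceil>" by linarith
    ultimately show "t \<in> {a..<a + \<lceil>r\<rceil>}" by simp
  qed
  have "card {t::int. \<lfloor>real_of_int t / r\<rfloor> + e = j} \<le> card {a..<a + \<lceil>r\<rceil>}"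
    by (rule card_mono[OF _ sub]) simp
  then show ?thesis using finite_subset[OF sub] by simp
qed

definition Eset :: "nat \<Rightarrow> real \<Rightarrow> (nat \<Rightarrow> int) set" where
  "Eset n r = PiE {..<n} (\<lambda>_. {0..\<lceil>1 / r\<rceil>})"

definition psi_r :: "real \<Rightarrow> (nat \<Rightarrow> int) \<Rightarrow> nat \<Rightarrow> int \<Rightarrow> int" where
  "psi_r r e i t = \<lfloor>real_of_int t / r\<rfloor> + e i"

lemma finite_Eset: "finite (Eset n r)"
  unfolding Eset_def by (rule finite_PiE) auto

lemma cover:
  assumes r: "0 < r" and x: "x \<in> cube n k"
  shows "\<exists>e\<in>Eset n r. Dr n r x \<in> cube n (Psi n (psi_r r e) k)"
proof -
  define y where "y = Dr n r x"
  define e where "e = restrict (\<lambda>i. \<lfloor>y i\<rfloor> - \<lfloor>real_of_int (k i) / r\<rfloor>) {..<n}"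
  have yi: "y i = x i / r" if "i < n" for i using that by (simp add: y_def Dr_def)
  have b: "real_of_int (k i) / r \<le> y i \<and> y i < real_of_int (k i) / r + 1 / r" if "i < n" for i
  proof -
    have "real_of_int (k i) \<le> x i" "x i < real_of_int (k i) + 1" using x that by (auto simp: cube_def)
    then have "real_of_int (k i) / r \<le> x i / r" "x i / r < (real_of_int (k i) + 1) / r"
      using r by (auto intro: divide_right_mono divide_strict_right_mono)
    then show ?thesis using yi[OF that] by (simp add: add_divide_distrib)
  qed
  have "e \<in> Eset n r"
    unfolding Eset_def
  proof (rule PiE_I)
    fix i assume i: "i \<in> {..<n}"
    then have bi: "real_of_int (k i) / r \<le> y i" "y i < real_of_int (k i) / r + 1 / r" using b by auto
    have "\<lfloor>real_of_int (k i) / r\<rfloor> \<le> \<lfloor>y i\<rfloor>" using bi(1) by (rule floor_mono)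
    moreover have "\<lfloor>y i\<rfloor> \<le> \<lfloor>real_of_int (k i) / r\<rfloor> + \<lceil>1 / r\<rceil>"
    proof -
      have "real_of_int \<lfloor>y i\<rfloor> < real_of_int \<lfloor>real_of_int (k i) / r\<rfloor> + 1 + real_of_int \<lceil>1 / r\<rceil>"
        using bi(2) of_int_floor_le[of "y i"] real_of_int_floor_add_one_gt[of "real_of_int (k i) / r"]
          le_of_int_ceiling[of "1 / r"] by linarith
      then show ?thesis by linarith
    qed
    ultimately show "e i \<in> {0..\<lceil>1 / r\<rceil>}" using i by (simp add: e_def)
  qed (simp add: e_def)
  moreover have "y \<in> cube n (Psi n (psi_r r e) k)"
  proof -
    have "Psi n (psi_r r e) k i = \<lfloor>y i\<rfloor>" if "i < n" for i
      using that by (simp add: Psi_def psi_r_def e_def)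
    moreover have "y \<in> space (Rn n)" unfolding y_def by (rule Dr_space)
    ultimately show ?thesis unfolding cube_def by simp
  qed
  ultimately show ?thesis by (auto simp: y_def)
qed

lemma LQ_dil:
  assumes p: "\<forall>i<n. 1 \<le> p i" and r: "0 < r" and f[measurable]: "f \<in> borel_measurable (Rn n)"
  shows "LQ n p (\<lambda>x. f (Dr n r x)) k \<le> ennreal (max 1 r) ^ n * (\<Sum>e\<in>Eset n r. LQ n p f (Psi n (psi_r r e) k))"
proof -
  define H where "H e y = ennreal (cmod (indicator (cube n (Psi n (psi_r r e) k)) y * f y))" for e y
  have Hm[measurable]: "H e \<in> borel_measurable (Rn n)" for e unfolding H_def by measurable
  have "LQ n p (\<lambda>x. f (Dr n r x)) k = mixed_norm lborel p n (\<lambda>x. ennreal (cmod (indicator (cube n k) x * f (Dr n r x))))"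
    by (simp add: LQ_def Lmixed_norm_def)
  also have "\<dots> \<le> mixed_norm lborel p n (\<lambda>x. (\<lambda>y. \<Sum>e\<in>Eset n r. H e y) (Dr n r x))"
  proof (rule mnorm_mono[OF p])
    show "secmeas lborel p n (\<lambda>x. ennreal (cmod (indicator (cube n k) x * f (Dr n r x))))"
      by (rule secmeas_leb) measurable
    fix x
    show "ennreal (cmod (indicator (cube n k) x * f (Dr n r x))) \<le> (\<lambda>y. \<Sum>e\<in>Eset n r. H e y) (Dr n r x)"
    proof (cases "x \<in> cube n k")
      case True
      then obtain e where e: "e \<in> Eset n r" "Dr n r x \<in> cube n (Psi n (psi_r r e) k)" using cover[OF r] by blast
      have "ennreal (cmod (indicator (cube n k) x * f (Dr n r x))) = H e (Dr n r x)"
        using True e by (simp add: H_def)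
      also have "\<dots> \<le> (\<Sum>e\<in>Eset n r. H e (Dr n r x))"
        by (rule member_le_sum) (use e finite_Eset in auto)
      finally show ?thesis by simp
    qed simp
  qed simp
  also have "\<dots> \<le> ennreal (max 1 r) ^ n * mixed_norm lborel p n (\<lambda>y. \<Sum>e\<in>Eset n r. H e y)"
    by (rule mnorm_scale[OF p r]) measurable
  also have "mixed_norm lborel p n (\<lambda>y. \<Sum>e\<in>Eset n r. H e y) \<le> (\<Sum>e\<in>Eset n r. mixed_norm lborel p n (H e))"
    by (rule mnorm_le_sum[OF p _ finite_Eset]) (auto intro!: secmeas_leb)
  also have "(\<Sum>e\<in>Eset n r. mixed_norm lborel p n (H e)) = (\<Sum>e\<in>Eset n r. LQ n p f (Psi n (psi_r r e) k))"
    by (simp add: LQ_def Lmixed_norm_def H_def[abs_def])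
  finally show ?thesis by (simp add: mult_left_mono)
qed

lemma amalgam_norm_dil:
  assumes p: "\<forall>i<n. 1 \<le> p i" and s: "\<forall>i<n. 1 \<le> s i" and r: "0 < r"
    and f[measurable]: "f \<in> borel_measurable (Rn n)"
  shows "amalgam_norm n p s (\<lambda>x. f (Dr n r x)) \<le> ennreal (max 1 r) ^ n *
     (\<Sum>e\<in>Eset n r. ennreal (max 1 (real (nat \<lceil>r\<rceil>))) ^ n * amalgam_norm n p s f)"
proof -
  define c where "c = ennreal (max 1 r) ^ n"
  have c: "c < top" by (simp add: c_def ennreal_power)
  have "amalgam_norm n p s (\<lambda>x. f (Dr n r x)) \<le> c * mixed_norm (count_space UNIV) s n (\<lambda>k. \<Sum>e\<in>Eset n r. LQ n p f (Psi n (psi_r r e) k))"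
    unfolding amalgam_norm_LQ
    by (rule mnorm_le_cmult[OF s _ secmeas_count secmeas_count secmeas_count c])
       (auto simp: c_def intro: LQ_dil[OF p r f])
  also have "mixed_norm (count_space UNIV) s n (\<lambda>k. \<Sum>e\<in>Eset n r. LQ n p f (Psi n (psi_r r e) k))
      \<le> (\<Sum>e\<in>Eset n r. mixed_norm (count_space UNIV) s n (\<lambda>k. LQ n p f (Psi n (psi_r r e) k)))"
    by (rule mnorm_le_sum[OF s _ finite_Eset secmeas_count secmeas_count]) auto
  also have "\<dots> \<le> (\<Sum>e\<in>Eset n r. ennreal (max 1 (real (nat \<lceil>r\<rceil>))) ^ n * amalgam_norm n p s f)"
  proof (rule sum_mono)
    fix e
    have m: "1 \<le> nat \<lceil>r\<rceil>" using r by linarith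
    show "mixed_norm (count_space UNIV) s n (\<lambda>k. LQ n p f (Psi n (psi_r r e) k))
        \<le> ennreal (max 1 (real (nat \<lceil>r\<rceil>))) ^ n * amalgam_norm n p s f"
      unfolding amalgam_norm_LQ
      by (rule mnorm_reindex[OF s m]) (unfold psi_r_def, rule fiber_card[OF r])
  qed
  finally show ?thesis by (simp add: c_def mult_left_mono)
qed


lemma conj_exp_ge1: "1 \<le> conj_exp x"
proof -
  have y: "1 - inverse x \<le> (1::ennreal)" by (simp add: diff_le_self_ennreal)
  show ?thesis
  proof (cases "1 - inverse x = 0")
    case True then show ?thesis by (simp add: conj_exp_def)
  next
    case False
    then obtain y' where y': "1 - inverse x = ennreal y'" "0 < y'" "y' \<le> 1"
      using y by (cases "1 - inverse x" rule: ennreal_cases) (auto simp: ennreal_le_1)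
    then have "1 \<le> inverse y'" by (intro one_le_inverse) auto
    then show ?thesis using y' by (simp add: conj_exp_def inverse_ennreal)
  qed
qed

lemma Rn_density_distr:
  assumes r: "0 < r"
  shows "Rn n = density (distr (Rn n) (Rn n) (Dr n r)) (\<lambda>_. ennreal ((1 / r) ^ n))"
proof -
  interpret product_sigma_finite "\<lambda>_::nat. lborel" by standard
  have "density (distr (Rn n) (Rn n) (Dr n r)) (\<lambda>_. ennreal ((1 / r) ^ n)) = PiM {..<n} (\<lambda>_. lborel)"
  proof (rule PiM_eqI)
    fix A :: "nat \<Rightarrow> real set" assume A: "\<And>i. i \<in> {..<n} \<Longrightarrow> A i \<in> sets lborel"
    have X: "PiE {..<n} A \<in> sets (Rn n)" using A by (intro sets_PiM_I_finite) auto
    have pre: "Dr n r -` PiE {..<n} A \<inter> space (Rn n) = PiE {..<n} (\<lambda>i. {t. t / r \<in> A i})"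
      by (auto simp: Dr_def space_PiM PiE_iff extensional_def)
    have dm: "(\<lambda>t::real. t / r) \<in> measurable lborel lborel" by measurable
    have B: "{t. t / r \<in> A i} \<in> sets lborel" if "i \<in> {..<n}" for i
      using measurable_sets[OF dm A[OF that]] by (simp add: vimage_def)
    have L: "emeasure lborel {t. t / r \<in> A i} = ennreal r * emeasure lborel (A i)" if "i \<in> {..<n}" for i
    proof -
      have Ai: "A i \<in> sets borel" using A[OF that] by simp
      have "emeasure (distr lborel borel ((*) (1 / r))) (A i) = emeasure lborel ((*) (1 / r) -` A i \<inter> space lborel)"
        by (rule emeasure_distr[OF _ Ai]) simp
      also have "(*) (1 / r) -` A i \<inter> space lborel = {t. t / r \<in> A i}" by auto
      finally have "emeasure lborel {t. t / r \<in> A i} = emeasure (distr lborel borel ((*) (1 / r))) (A i)" ..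
      also have "\<dots> = emeasure (density lborel (\<lambda>_. ennreal (inverse \<bar>1 / r\<bar>))) (A i)"
        using lborel_distr_mult[of "1 / r"] r by simp
      also have "\<dots> = ennreal (inverse \<bar>1 / r\<bar>) * emeasure lborel (A i)"
        by (rule emeasure_density_const) (use A[OF that] in simp)
      also have "inverse \<bar>1 / r\<bar> = r" using r by simp
      finally show ?thesis .
    qed
    have "emeasure (density (distr (Rn n) (Rn n) (Dr n r)) (\<lambda>_. ennreal ((1 / r) ^ n))) (PiE {..<n} A)
        = ennreal ((1 / r) ^ n) * emeasure (distr (Rn n) (Rn n) (Dr n r)) (PiE {..<n} A)"
      by (rule emeasure_density_const) (use X in simp)
    also have "emeasure (distr (Rn n) (Rn n) (Dr n r)) (PiE {..<n} A) = emeasure (Rn n) (PiE {..<n} (\<lambda>i. {t. t / r \<in> A i}))"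
      by (subst emeasure_distr[OF Dr_meas X]) (simp add: pre)
    also have "\<dots> = (\<Prod>i<n. emeasure lborel {t. t / r \<in> A i})"
      by (rule emeasure_PiM) (use B in auto)
    also have "\<dots> = (\<Prod>i<n. ennreal r * emeasure lborel (A i))"
      by (rule prod.cong) (auto simp: L)
    also have "\<dots> = ennreal r ^ n * (\<Prod>i<n. emeasure lborel (A i))"
      by (simp add: prod.distrib)
    also have "ennreal ((1 / r) ^ n) * (ennreal r ^ n * (\<Prod>i<n. emeasure lborel (A i))) = (\<Prod>i<n. emeasure lborel (A i))"
    proof -
      have "ennreal ((1 / r) ^ n) * ennreal r ^ n = ennreal ((1 / r) ^ n * r ^ n)"
        using r by (simp add: ennreal_power ennreal_mult)
      also have "(1 / r) ^ n * r ^ n = 1" using r by (simp add: power_mult_distrib[symmetric])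
      finally show ?thesis by (simp add: mult.assoc[symmetric])
    qed
    finally show "emeasure (density (distr (Rn n) (Rn n) (Dr n r)) (\<lambda>_. ennreal ((1 / r) ^ n))) (PiE {..<n} A)
        = (\<Prod>i\<in>{..<n}. emeasure lborel (A i))" .
  qed simp_all
  then show ?thesis by simp
qed

lemma integrable_Dr:
  fixes g :: "(nat \<Rightarrow> real) \<Rightarrow> complex"
  assumes r: "0 < r" and g: "integrable (Rn n) g"
  shows "integrable (Rn n) (\<lambda>x. g (Dr n r x))"
proof -
  define N where "N = distr (Rn n) (Rn n) (Dr n r)"
  define c where "c = ennreal ((1 / r) ^ n)"
  have gm[measurable]: "g \<in> borel_measurable (Rn n)" using g by (rule borel_measurable_integrable)
  have eq: "Rn n = density N (\<lambda>_. c)" unfolding N_def c_def by (rule Rn_density_distr[OF r])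
  have sN: "sets N = sets (Rn n)" by (simp add: N_def)
  have gN: "(\<lambda>y. ennreal (norm (g y))) \<in> borel_measurable N"
    by (subst measurable_cong_sets[OF sN refl]) measurable
  have "(\<integral>\<^sup>+y. norm (g y) \<partial>Rn n) = (\<integral>\<^sup>+y. c * norm (g y) \<partial>N)"
    by (subst eq, rule nn_integral_density[OF measurable_const gN]) simp
  also have "\<dots> = c * (\<integral>\<^sup>+y. norm (g y) \<partial>N)"
    by (rule nn_integral_cmult[OF gN])
  also have "(\<integral>\<^sup>+y. norm (g y) \<partial>N) = (\<integral>\<^sup>+x. norm (g (Dr n r x)) \<partial>Rn n)"
    unfolding N_def by (rule nn_integral_distr[OF Dr_meas gN[unfolded N_def]])
  finally have e: "(\<integral>\<^sup>+y. norm (g y) \<partial>Rn n) = c * (\<integral>\<^sup>+x. norm (g (Dr n r x)) \<partial>Rn n)" .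
  have "(\<integral>\<^sup>+y. norm (g y) \<partial>Rn n) < \<infinity>" using g by (simp add: integrable_iff_bounded)
  moreover have "c \<noteq> 0" using r by (simp add: c_def)
  ultimately have "(\<integral>\<^sup>+x. norm (g (Dr n r x)) \<partial>Rn n) < \<infinity>"
    unfolding e by (auto simp: ennreal_mult_less_top top.not_eq_extremum)
  then show ?thesis by (simp add: integrable_iff_bounded)
qed

lemma loc_int_Dr:
  assumes r: "0 < r" and f: "loc_int n f"
  shows "loc_int n (\<lambda>x. f (Dr n r x))"
  unfolding loc_int_def
proof
  fix R
  have gi: "integrable (Rn n) (\<lambda>y. indicator (box_R n (R / r)) y *\<^sub>R f y)"
    using f by (simp add: loc_int_def set_integrable_def)
  have "integrable (Rn n) (\<lambda>x. indicator (box_R n (R / r)) (Dr n r x) *\<^sub>R f (Dr n r x))"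
    by (rule integrable_Dr[OF r gi])
  moreover have ind: "indicator (box_R n (R / r)) (Dr n r x) = (indicator (box_R n R) x :: real)" if x: "x \<in> space (Rn n)" for x
  proof -
    have "\<bar>x i / r\<bar> \<le> R / r \<longleftrightarrow> \<bar>x i\<bar> \<le> R" for i
      using r by (simp add: abs_divide divide_le_cancel)
    then have "Dr n r x \<in> box_R n (R / r) \<longleftrightarrow> x \<in> box_R n R"
      using x Dr_space[of n r x] by (auto simp: box_R_def Dr_def)
    then show ?thesis by (simp add: indicator_def)
  qed
  moreover have "integrable (Rn n) (\<lambda>x. indicator (box_R n R) x *\<^sub>R f (Dr n r x)) \<longleftrightarrow>
      integrable (Rn n) (\<lambda>x. indicator (box_R n (R / r)) (Dr n r x) *\<^sub>R f (Dr n r x))"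
    by (rule Bochner_Integration.integrable_cong) (auto simp: ind)
  ultimately show "set_integrable (Rn n) (box_R n R) (\<lambda>x. f (Dr n r x))"
    unfolding set_integrable_def by simp
qed

lemma dil_eq: "dil n a r f = (\<lambda>x. complex_of_real (r powr (- real n * enn2real (inverse a))) * f (Dr n r x))"
  by (simp add: dil_def Dr_def fun_eq_iff)

lemma dil_amalgam:
  assumes p: "\<forall>i<n. 1 \<le> p i" and s: "\<forall>i<n. 1 \<le> s i" and r: "0 < r" and f: "f \<in> amalgam n p s"
  shows "dil n a r f \<in> amalgam n p s"
proof -
  have fl: "loc_int n f" and fn: "amalgam_norm n p s f < top" using f by (auto simp: amalgam_def)
  have "amalgam_norm n p s (\<lambda>x. f (Dr n r x)) \<le> ennreal (max 1 r) ^ n *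
     (\<Sum>e\<in>Eset n r. ennreal (max 1 (real (nat \<lceil>r\<rceil>))) ^ n * amalgam_norm n p s f)"
    by (rule amalgam_norm_dil[OF p s r loc_int_meas[OF fl]])
  also have "\<dots> < top"
    using fn by (simp add: ennreal_mult_less_top ennreal_power sum_constant of_nat_less_top)
  finally have "(\<lambda>x. f (Dr n r x)) \<in> amalgam n p s"
    using loc_int_Dr[OF r fl] by (simp add: amalgam_def)
  then show ?thesis unfolding dil_eq by (rule amalgam_cmult[OF p s])
qed

lemma amalgam_sum:
  assumes p: "\<forall>i<n. 1 \<le> p i" and s: "\<forall>i<n. 1 \<le> s i"
  shows "finite F \<Longrightarrow> (\<And>j. j \<in> F \<Longrightarrow> h j \<in> amalgam n p s) \<Longrightarrow> (\<lambda>x. \<Sum>j\<in>F. h j x) \<in> amalgam n p s"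
proof (induction F rule: finite_induct)
  case empty
  then show ?case using amalgam_zero[OF p s] by simp
next
  case (insert j F)
  have "(\<lambda>x. h j x + (\<Sum>j\<in>F. h j x)) \<in> amalgam n p s"
    by (rule amalgam_add[OF p s]) (use insert in auto)
  then show ?case using insert.hyps by simp
qed


lemma Dr_1: "x \<in> space (Rn n) \<Longrightarrow> Dr n 1 x = x"
  by (auto simp: Dr_def space_PiM PiE_iff extensional_def fun_eq_iff)

lemma amalgam_sub_H:
  assumes p: "\<forall>i<n. 1 \<le> p i" and s: "\<forall>i<n. 1 \<le> s i" and f: "f \<in> amalgam n p s"
  shows "f \<in> Hspace n p s a"
proof -
  have fl: "loc_int n f" and fn: "amalgam_norm n p s f < top" using f by (auto simp: amalgam_def)
  define M where "M = enn2real (amalgam_norm n p s f) + 1"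
  have M: "0 < M" by (simp add: M_def add_nonneg_pos)
  define g0 where "g0 = (\<lambda>x. complex_of_real (1 / M) * f x)"
  define c where "c = (\<lambda>j::nat. if j = 0 then complex_of_real M else 0)"
  define rr where "rr = (\<lambda>j::nat. 1::real)"
  define g where "g = (\<lambda>j::nat. if j = 0 then g0 else (\<lambda>_. 0))"
  have g0A: "g0 \<in> amalgam n p s" unfolding g0_def by (rule amalgam_cmult[OF p s f])
  have g0n: "amalgam_norm n p s g0 \<le> 1"
  proof -
    have "amalgam_norm n p s g0 \<le> ennreal (cmod (complex_of_real (1 / M))) * amalgam_norm n p s f"
      unfolding g0_def by (rule amalgam_norm_cmult[OF p s loc_int_meas[OF fl]])
    also have "amalgam_norm n p s f = ennreal (enn2real (amalgam_norm n p s f))"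
      using fn by (simp add: ennreal_enn2real_if)
    also have "ennreal (cmod (complex_of_real (1 / M))) * ennreal (enn2real (amalgam_norm n p s f))
        = ennreal ((1 / M) * enn2real (amalgam_norm n p s f))"
    proof -
      have cm: "cmod (complex_of_real (1 / M)) = 1 / M" using M by (simp add: norm_divide)
      show ?thesis by (simp only: cm) (rule ennreal_mult[symmetric], use M in auto)
    qed
    also have "ennreal ((1 / M) * enn2real (amalgam_norm n p s f)) \<le> ennreal 1"
      by (rule ennreal_leI) (use M in \<open>simp add: M_def field_simps\<close>)
    finally show ?thesis by simp
  qed
  have b1: "\<forall>j. 0 < rr j \<and> g j \<in> amalgam n p s \<and> amalgam_norm n p s (g j) \<le> 1"
    using g0A g0n amalgam_zero[OF p s] amalgam_norm_zero[OF p s] by (simp add: rr_def g_def)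
  have b2: "summable (\<lambda>j. cmod (c j))"
  proof -
    have "(\<lambda>j. cmod (c j)) = (\<lambda>j. if j \<in> {0} then M else 0)" using M by (auto simp: c_def fun_eq_iff)
    then show "summable (\<lambda>j. cmod (c j))" by simp
  qed
  have b3: "\<forall>R. (\<lambda>N. \<integral>\<^sup>+ x. indicator (box_R n R) x *
                 ennreal (cmod (f x - (\<Sum>j<N. c j * dil n a (rr j) (g j) x))) \<partial>Rn n) \<longlonglongrightarrow> 0"
  proof
    fix R
    show "(\<lambda>N. \<integral>\<^sup>+ x. indicator (box_R n R) x *
                 ennreal (cmod (f x - (\<Sum>j<N. c j * dil n a (rr j) (g j) x))) \<partial>Rn n) \<longlonglongrightarrow> 0"
    proof (rule tendsto_eventually, rule eventually_sequentiallyI[of 1])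
      fix N :: nat assume N: "1 \<le> N"
      have e: "(\<Sum>j<N. c j * dil n a (rr j) (g j) x) = f x" if x: "x \<in> space (Rn n)" for x
      proof -
        have "(\<Sum>j<N. c j * dil n a (rr j) (g j) x) = (\<Sum>j<N. if j = 0 then c 0 * dil n a 1 g0 x else 0)"
          by (rule sum.cong) (auto simp: c_def rr_def g_def)
        also have "\<dots> = c 0 * dil n a 1 g0 x" using N by simp
        also have "dil n a 1 g0 x = g0 x" by (simp add: dil_eq Dr_1[OF x])
        finally show ?thesis using M by (simp add: c_def g0_def)
      qed
      show "(\<integral>\<^sup>+ x. indicator (box_R n R) x *
                 ennreal (cmod (f x - (\<Sum>j<N. c j * dil n a (rr j) (g j) x))) \<partial>Rn n) = 0"
        by (subst nn_integral_cong[where v="\<lambda>_. 0"]) (auto simp: e)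
    qed
  qed
  have bd: "block_decomp n p s a f c rr g"
    unfolding block_decomp_def using b1 b2 b3 by blast
  then show ?thesis using fl by (auto simp: Hspace_def)
qed

lemma sum_shift_split: fixes M N :: nat shows "(\<Sum>j<M + N. h j) = (\<Sum>j<N. h j) + (\<Sum>j<M. h (j + N))"
  by (induction M) (simp_all add: ac_simps)

lemma H_dense:
  assumes p: "\<forall>i<n. 1 \<le> p i" and s: "\<forall>i<n. 1 \<le> s i" and f: "f \<in> Hspace n p s a" and e: "0 < \<epsilon>"
  shows "\<exists>G\<in>amalgam n p s. (\<lambda>x. f x - G x) \<in> Hspace n p s a \<and> Hnorm n p s a (\<lambda>x. f x - G x) < \<epsilon>"
proof -
  from f obtain c r g where fl: "loc_int n f" and bd: "block_decomp n p s a f c r g"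
    by (auto simp: Hspace_def)
  have bd1: "\<And>j. 0 < r j \<and> g j \<in> amalgam n p s \<and> amalgam_norm n p s (g j) \<le> 1"
    and sm: "summable (\<lambda>j. cmod (c j))"
    and conv: "\<And>R. (\<lambda>N. \<integral>\<^sup>+ x. indicator (box_R n R) x *
                 ennreal (cmod (f x - (\<Sum>j<N. c j * dil n a (r j) (g j) x))) \<partial>Rn n) \<longlonglongrightarrow> 0"
    using bd unfolding block_decomp_def by auto
  obtain N where N: "\<And>m. m \<ge> N \<Longrightarrow> norm (\<Sum>i. cmod (c (i + m))) < \<epsilon>"
    using suminf_exist_split[OF e sm] by blast
  have smN: "summable (\<lambda>i. cmod (c (i + N)))" using summable_ignore_initial_segment[OF sm, of N] by simp
  have tail: "(\<Sum>i. cmod (c (i + N))) < \<epsilon>"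
    using N[of N] suminf_nonneg[OF smN] by simp
  define G where "G = (\<lambda>x. \<Sum>j<N. c j * dil n a (r j) (g j) x)"
  have GA: "G \<in> amalgam n p s" unfolding G_def
    by (rule amalgam_sum[OF p s]) (auto intro!: amalgam_cmult[OF p s] dil_amalgam[OF p s] simp: bd1)
  have Gl: "loc_int n G" using GA by (simp add: amalgam_def)
  have fGl: "loc_int n (\<lambda>x. f x - G x)"
    using loc_int_add[OF fl loc_int_cmult[OF Gl, of "-1"]] by simp
  define c' where "c' j = c (j + N)" for j
  define r' where "r' j = r (j + N)" for j
  define g' where "g' j = g (j + N)" for j
  have a1: "\<forall>j. 0 < r' j \<and> g' j \<in> amalgam n p s \<and> amalgam_norm n p s (g' j) \<le> 1"
    using bd1 by (simp add: r'_def g'_def)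
  have a2: "summable (\<lambda>j. cmod (c' j))" using smN by (simp add: c'_def)
  have a3: "\<forall>R. (\<lambda>M. \<integral>\<^sup>+ x. indicator (box_R n R) x *
                 ennreal (cmod (f x - G x - (\<Sum>j<M. c' j * dil n a (r' j) (g' j) x))) \<partial>Rn n) \<longlonglongrightarrow> 0"
  proof
    fix R
    have eq: "f x - G x - (\<Sum>j<M. c' j * dil n a (r' j) (g' j) x) = f x - (\<Sum>j<M + N. c j * dil n a (r j) (g j) x)" for x M
      unfolding sum_shift_split G_def c'_def r'_def g'_def by simp
    show "(\<lambda>M. \<integral>\<^sup>+ x. indicator (box_R n R) x *
                 ennreal (cmod (f x - G x - (\<Sum>j<M. c' j * dil n a (r' j) (g' j) x))) \<partial>Rn n) \<longlonglongrightarrow> 0"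
      unfolding eq using LIMSEQ_ignore_initial_segment[OF conv[of R], of N] by simp
  qed
  have bd': "block_decomp n p s a (\<lambda>x. f x - G x) c' r' g'"
    unfolding block_decomp_def using a1 a2 a3 by blast
  have H: "(\<lambda>x. f x - G x) \<in> Hspace n p s a" using fGl bd' by (auto simp: Hspace_def)
  have "Hnorm n p s a (\<lambda>x. f x - G x) \<le> (\<Sum>j. cmod (c' j))"
    unfolding Hnorm_def
  proof (rule cInf_lower)
    show "(\<Sum>j. cmod (c' j)) \<in> {\<Sum>j. cmod (c j) |c r g. block_decomp n p s a (\<lambda>x. f x - G x) c r g}"
      using bd' by blast
    show "bdd_below {\<Sum>j. cmod (c j) |c r g. block_decomp n p s a (\<lambda>x. f x - G x) c r g}"
      by (rule bdd_belowI[of _ 0]) (auto simp: block_decomp_def intro!: suminf_nonneg)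
  qed
  also have "\<dots> < \<epsilon>" using tail by (simp add: c'_def)
  finally show ?thesis using GA H by blast
qed

theorem proposition4p3:
  fixes n :: nat and p s :: "nat \<Rightarrow> ennreal" and \<alpha> :: ennreal
  assumes "n \<ge> 1"
    and "\<forall>i<n. 1 \<le> p i" and "\<forall>i<n. 1 \<le> s i"
    and "(\<Sum>i<n. inverse (s i)) / of_nat n \<le> inverse \<alpha>"
    and "inverse \<alpha> \<le> (\<Sum>i<n. inverse (p i)) / of_nat n"
  defines "A \<equiv> amalgam n (conj_exp \<circ> p) (conj_exp \<circ> s)"
    and "H \<equiv> Hspace n (conj_exp \<circ> p) (conj_exp \<circ> s) (conj_exp \<alpha>)"
  shows "A \<subseteq> H
    \<and> (\<lambda>_. 0) \<in> A \<and> (\<forall>f\<in>A. \<forall>g\<in>A. (\<lambda>x. f x + g x) \<in> A)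
    \<and> (\<forall>f\<in>A. \<forall>c::complex. (\<lambda>x. c * f x) \<in> A)
    \<and> (\<forall>f\<in>H. \<forall>\<epsilon>>0. \<exists>g\<in>A. (\<lambda>x. f x - g x) \<in> H
          \<and> Hnorm n (conj_exp \<circ> p) (conj_exp \<circ> s) (conj_exp \<alpha>) (\<lambda>x. f x - g x) < \<epsilon>)"
proof -
  have p': "\<forall>i<n. 1 \<le> (conj_exp \<circ> p) i" and s': "\<forall>i<n. 1 \<le> (conj_exp \<circ> s) i"
    by (auto simp: conj_exp_ge1)
  show ?thesis unfolding A_def H_def
    using amalgam_sub_H[OF p' s'] amalgam_zero[OF p' s'] amalgam_add[OF p' s'] amalgam_cmult[OF p' s']
      H_dense[OF p' s']
    by blast
qed


end
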